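(* Let $(A,\mathcal H)$ be a left bialgebroid. The assignments $I\mapsto[\pi:\mathcal H\to\mathcal H/I]$ and $[\pi:\mathcal H\to\overline{\mathcal H}]\mapsto\ker(\pi)$ are well-defined, mutually inverse bijections between the set of left ideal two-sided coideals of $\mathcal H$ and the set of quotient left $\mathcal H$-module corings of $\mathcal H$.
   Context: $\Bbbk$ is a field. A left bialgebroid $(A,\mathcal H)$: $\Bbbk$-algebras $A,\mathcal H$, algebra maps $s:A\to\mathcal H$, $t:A^o\to\mathcal H$ with commuting images, $A$-bilinear $\Delta:\mathcal H\to\mathcal H\otimes_A\mathcal H$, $\varepsilon:\mathcal H\to A$ (bimodule structure $a\cdot h\cdot b=s(a)t(b)h$; $\mathcal H\otimes_A\mathcal H$ = quotient of $\mathcal H\otimes\mathcal H$ by span of $t(a)x\otimes y-x\otimes s(a)y$), with $(\mathcal H,\Delta,\varepsilon)$ a coassociative counital $A$-coring, $\Delta$ an algebra map into the Takeuchi product $\{\sum x_i\otimes_Ay_i:\sum x_it(a)\otimes_Ay_i=\sum x_i\otimes_Ay_is(a)\ \forall a\}$, $\varepsilon(xs(\varepsilon(y)))=\varepsilon(xy)=\varepsilon(xt(\varepsilon(y)))$, $\varepsilon(1)=1$; $\Delta(x)=\sum x_1\otimes_Ax_2$. Left $\mathcal H$-modules form a monoidal category: each is an $A$-bimodule via $a\cdot m\cdot b=s(a)t(b)m$, the tensor product $M\otimes_AN$ (quotient of $M\otimes N$ by $t(a)m\otimes n-m\otimes s(a)n$) has action $h(m\otimes n)=\sum h_1m\otimes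 h_2n$, and the unit is $A$ with $h\cdot a=\varepsilon(hs(a))$. A left $\mathcal H$-module coring is a comonoid in this monoidal category; $\mathcal H$ itself is one (regular left action, $\Delta$, $\varepsilon$). A quotient left $\mathcal H$-module coring of $\mathcal H$ is a surjective morphism of left $\mathcal H$-module corings $\pi:\mathcal H\to\overline{\mathcal H}$ (considered up to isomorphism under $\mathcal H$). A left ideal two-sided coideal is a left ideal $I$ with $\varepsilon(I)=0$ and $\Delta(I)\subseteq$ image of $I\otimes_A\mathcal H+\mathcal H\otimes_AI$. *)

theory Defs
  imports Complex_Main
begin

text \<open>A is the type 'a, H is the type 'h (both rings with k-scalar multiplications
scA, scH making them k-algebras); src = s, tgt = t, cop = Delta, cou = epsilon.
Elements of tensor products are represented by finitely supported formal
k-linear combinations of pairs (resp. triples), i.e. elements of the free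
k-vector space, and equality in the tensor product is equality modulo the
k-span of the defining relations.\<close>

record ('k, 'a, 'h) bialg =
  scA :: "'k \<Rightarrow> 'a \<Rightarrow> 'a"
  scH :: "'k \<Rightarrow> 'h \<Rightarrow> 'h"
  src :: "'a \<Rightarrow> 'h"
  tgt :: "'a \<Rightarrow> 'h"
  cop :: "'h \<Rightarrow> 'h \<times> 'h \<Rightarrow> 'k"
  cou :: "'h \<Rightarrow> 'a"

text \<open>A left H-module on a carrier set (its k-structure is c.m = (c 1_H) m,
its A-bimodule structure is a.m.b = s(a) t(b) m).\<close>

record ('h, 'm) hmod =
  mcar :: "'m set"
  madd :: "'m \<Rightarrow> 'm \<Rightarrow> 'm"
  mzero :: 'm
  mact :: "'h \<Rightarrow> 'm \<Rightarrow> 'm"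

record ('h, 'm, 'k, 'a) hcor = "('h, 'm) hmod" +
  mcop :: "'m \<Rightarrow> 'm \<times> 'm \<Rightarrow> 'k"
  mcou :: "'m \<Rightarrow> 'a"

definition kalg :: "('k::field \<Rightarrow> 'r::ring_1 \<Rightarrow> 'r) \<Rightarrow> bool" where
  "kalg sc \<longleftrightarrow> vector_space sc \<and>
     (\<forall>c x y. sc c (x * y) = sc c x * y \<and> sc c (x * y) = x * sc c y)"

definition fsupp :: "('x \<Rightarrow> 'k::zero) \<Rightarrow> 'x set" where
  "fsupp \<phi> = {p. \<phi> p \<noteq> 0}"

definition fdelta :: "'x \<Rightarrow> 'x \<Rightarrow> 'k::{zero,one}" where
  "fdelta p = (\<lambda>q. if q = p then 1 else 0)"

definition fbind :: "('x \<Rightarrow> 'k::comm_ring_1) \<Rightarrow> ('x \<Rightarrow> 'y \<Rightarrow> 'k) \<Rightarrow> 'y \<Rightarrow> 'k" where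
  "fbind \<phi> F = (\<lambda>y. \<Sum>p\<in>fsupp \<phi>. \<phi> p * F p y)"

definition fpush :: "('x \<Rightarrow> 'y) \<Rightarrow> ('x \<Rightarrow> 'k::comm_ring_1) \<Rightarrow> 'y \<Rightarrow> 'k" where
  "fpush f \<phi> = fbind \<phi> (\<lambda>p. fdelta (f p))"

definition msc where "msc B M c m = mact M (scH B c 1) m"

definition tgen :: "('k::field, 'a, 'h::ring_1) bialg \<Rightarrow> ('h, 'm, 'z1) hmod_scheme
    \<Rightarrow> ('h, 'n, 'z2) hmod_scheme \<Rightarrow> ('m \<times> 'n \<Rightarrow> 'k) set" where
  "tgen B M N =
     {(\<lambda>q. fdelta (madd M m m', n) q - fdelta (m, n) q - fdelta (m', n) q) | m m' n.
         m \<in> mcar M \<and> m' \<in> mcar M \<and> n \<in> mcar N}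
   \<union> {(\<lambda>q. fdelta (m, madd N n n') q - fdelta (m, n) q - fdelta (m, n') q) | m n n'.
         m \<in> mcar M \<and> n \<in> mcar N \<and> n' \<in> mcar N}
   \<union> {(\<lambda>q. fdelta (msc B M c m, n) q - c * fdelta (m, n) q) | c m n.
         m \<in> mcar M \<and> n \<in> mcar N}
   \<union> {(\<lambda>q. fdelta (m, msc B N c n) q - c * fdelta (m, n) q) | c m n.
         m \<in> mcar M \<and> n \<in> mcar N}
   \<union> {(\<lambda>q. fdelta (mact M (tgt B a) m, n) q - fdelta (m, mact N (src B a) n) q) | a m n.
         m \<in> mcar M \<and> n \<in> mcar N}"

inductive tnull :: "('k::field, 'a, 'h::ring_1) bialg \<Rightarrow> ('h, 'm, 'z1) hmod_scheme
    \<Rightarrow> ('h, 'n, 'z2) hmod_scheme \<Rightarrow> ('m \<times> 'n \<Rightarrow> 'k) \<Rightarrow> bool"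
  for B M N where
  tnull_zero: "tnull B M N (\<lambda>_. 0)"
| tnull_step: "g \<in> tgen B M N \<Longrightarrow> tnull B M N \<phi> \<Longrightarrow> tnull B M N (\<lambda>p. \<phi> p + c * g p)"

definition tsum where
  "tsum M N \<phi> \<longleftrightarrow> finite (fsupp \<phi>) \<and> fsupp \<phi> \<subseteq> mcar M \<times> mcar N"

definition teq where
  "teq B M N \<phi> \<psi> \<longleftrightarrow> tnull B M N (\<lambda>p. \<phi> p - \<psi> p)"

definition tgen3 :: "('k::field, 'a, 'h::ring_1) bialg \<Rightarrow> ('h, 'm, 'z1) hmod_scheme
    \<Rightarrow> ('h, 'n, 'z2) hmod_scheme \<Rightarrow> ('h, 'p, 'z3) hmod_scheme
    \<Rightarrow> ('m \<times> 'n \<times> 'p \<Rightarrow> 'k) set" where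
  "tgen3 B M N P =
     {(\<lambda>q. fdelta (madd M m m', n, r) q - fdelta (m, n, r) q - fdelta (m', n, r) q) | m m' n r.
         m \<in> mcar M \<and> m' \<in> mcar M \<and> n \<in> mcar N \<and> r \<in> mcar P}
   \<union> {(\<lambda>q. fdelta (m, madd N n n', r) q - fdelta (m, n, r) q - fdelta (m, n', r) q) | m n n' r.
         m \<in> mcar M \<and> n \<in> mcar N \<and> n' \<in> mcar N \<and> r \<in> mcar P}
   \<union> {(\<lambda>q. fdelta (m, n, madd P r r') q - fdelta (m, n, r) q - fdelta (m, n, r') q) | m n r r'.
         m \<in> mcar M \<and> n \<in> mcar N \<and> r \<in> mcar P \<and> r' \<in> mcar P}
   \<union> {(\<lambda>q. fdelta (msc B M c m, n, r) q - c * fdelta (m, n, r) q) | c m n r.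
         m \<in> mcar M \<and> n \<in> mcar N \<and> r \<in> mcar P}
   \<union> {(\<lambda>q. fdelta (m, msc B N c n, r) q - c * fdelta (m, n, r) q) | c m n r.
         m \<in> mcar M \<and> n \<in> mcar N \<and> r \<in> mcar P}
   \<union> {(\<lambda>q. fdelta (m, n, msc B P c r) q - c * fdelta (m, n, r) q) | c m n r.
         m \<in> mcar M \<and> n \<in> mcar N \<and> r \<in> mcar P}
   \<union> {(\<lambda>q. fdelta (mact M (tgt B a) m, n, r) q - fdelta (m, mact N (src B a) n, r) q) | a m n r.
         m \<in> mcar M \<and> n \<in> mcar N \<and> r \<in> mcar P}
   \<union> {(\<lambda>q. fdelta (m, mact N (tgt B a) n, r) q - fdelta (m, n, mact P (src B a) r) q) | a m n r.
         m \<in> mcar M \<and> n \<in> mcar N \<and> r \<in> mcar P}"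

inductive tnull3 :: "('k::field, 'a, 'h::ring_1) bialg \<Rightarrow> ('h, 'm, 'z1) hmod_scheme
    \<Rightarrow> ('h, 'n, 'z2) hmod_scheme \<Rightarrow> ('h, 'p, 'z3) hmod_scheme \<Rightarrow> ('m \<times> 'n \<times> 'p \<Rightarrow> 'k) \<Rightarrow> bool"
  for B M N P where
  tnull3_zero: "tnull3 B M N P (\<lambda>_. 0)"
| tnull3_step: "g \<in> tgen3 B M N P \<Longrightarrow> tnull3 B M N P \<phi> \<Longrightarrow> tnull3 B M N P (\<lambda>p. \<phi> p + c * g p)"

definition teq3 where
  "teq3 B M N P \<phi> \<psi> \<longleftrightarrow> tnull3 B M N P (\<lambda>p. \<phi> p - \<psi> p)"

text \<open>The action of h on M (x)_A N: h (sum m_i (x) n_i) = sum h_1 m_i (x) h_2 n_i,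
where Phi represents Delta(h).\<close>
definition tact where
  "tact M N \<Phi> \<psi> = fbind \<Phi> (\<lambda>(u, v). fpush (\<lambda>(x, y). (mact M u x, mact N v y)) \<psi>)"

definition msum where
  "msum M f S = Finite_Set.fold (\<lambda>x acc. madd M (f x) acc) (mzero M) S"

definition hmodule :: "('k::field, 'a, 'h::ring_1) bialg \<Rightarrow> ('h, 'm, 'z) hmod_scheme \<Rightarrow> bool" where
  "hmodule B M \<longleftrightarrow>
     mzero M \<in> mcar M \<and>
     (\<forall>x\<in>mcar M. \<forall>y\<in>mcar M. madd M x y \<in> mcar M) \<and>
     (\<forall>h. \<forall>x\<in>mcar M. mact M h x \<in> mcar M) \<and>
     (\<forall>x\<in>mcar M. \<forall>y\<in>mcar M. \<forall>z\<in>mcar M. madd M (madd M x y) z = madd M x (madd M y z)) \<and>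
     (\<forall>x\<in>mcar M. \<forall>y\<in>mcar M. madd M x y = madd M y x) \<and>
     (\<forall>x\<in>mcar M. madd M (mzero M) x = x) \<and>
     (\<forall>x\<in>mcar M. \<exists>y\<in>mcar M. madd M x y = mzero M) \<and>
     (\<forall>x\<in>mcar M. mact M 1 x = x) \<and>
     (\<forall>h g. \<forall>x\<in>mcar M. mact M (h * g) x = mact M h (mact M g x)) \<and>
     (\<forall>h g. \<forall>x\<in>mcar M. mact M (h + g) x = madd M (mact M h x) (mact M g x)) \<and>
     (\<forall>h. \<forall>x\<in>mcar M. \<forall>y\<in>mcar M. mact M h (madd M x y) = madd M (mact M h x) (mact M h y))"

definition coassoc where
  "coassoc B M D \<longleftrightarrow> (\<forall>c\<in>mcar M.
     teq3 B M M M
       (fbind (D c) (\<lambda>(u, v). fpush (\<lambda>(x, y). (x, y, v)) (D u)))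
       (fbind (D c) (\<lambda>(u, v). fpush (\<lambda>(x, y). (u, x, y)) (D v))))"

text \<open>Counitality, using A (x)_A M = M (a (x) m = s(a) m) and M (x)_A A = M (m (x) a = t(a) m).\<close>
definition counital where
  "counital B M D E \<longleftrightarrow> (\<forall>c\<in>mcar M.
     msum M (\<lambda>p. mact M (scH B (D c p) 1 * src B (E (fst p))) (snd p)) (fsupp (D c)) = c \<and>
     msum M (\<lambda>p. mact M (scH B (D c p) 1 * tgt B (E (snd p))) (fst p)) (fsupp (D c)) = c)"

definition Hc :: "('k, 'a, 'h::ring_1) bialg \<Rightarrow> ('h, 'h, 'k, 'a) hcor" where
  "Hc B = \<lparr>mcar = UNIV, madd = (+), mzero = 0, mact = (*), mcop = cop B, mcou = cou B\<rparr>"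

definition bialgebroid :: "('k::field, 'a::ring_1, 'h::ring_1) bialg \<Rightarrow> bool" where
  "bialgebroid B \<longleftrightarrow>
     kalg (scA B) \<and> kalg (scH B) \<and>
     (\<forall>c a. src B (scA B c a) = scH B c (src B a)) \<and>
     (\<forall>a b. src B (a + b) = src B a + src B b) \<and>
     (\<forall>a b. src B (a * b) = src B a * src B b) \<and> src B 1 = 1 \<and>
     (\<forall>c a. tgt B (scA B c a) = scH B c (tgt B a)) \<and>
     (\<forall>a b. tgt B (a + b) = tgt B a + tgt B b) \<and>
     (\<forall>a b. tgt B (a * b) = tgt B b * tgt B a) \<and> tgt B 1 = 1 \<and>
     (\<forall>a b. src B a * tgt B b = tgt B b * src B a) \<and>
     \<comment> \<open>Delta: A-bilinear k-linear map into H (x)_A H\<close>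
     (\<forall>x. tsum (Hc B) (Hc B) (cop B x)) \<and>
     (\<forall>x y. teq B (Hc B) (Hc B) (cop B (x + y)) (\<lambda>p. cop B x p + cop B y p)) \<and>
     (\<forall>c x. teq B (Hc B) (Hc B) (cop B (scH B c x)) (\<lambda>p. c * cop B x p)) \<and>
     (\<forall>a b x. teq B (Hc B) (Hc B) (cop B (src B a * tgt B b * x))
         (fpush (\<lambda>(u, v). (src B a * u, tgt B b * v)) (cop B x))) \<and>
     \<comment> \<open>epsilon: A-bilinear k-linear map into A\<close>
     (\<forall>x y. cou B (x + y) = cou B x + cou B y) \<and>
     (\<forall>c x. cou B (scH B c x) = scA B c (cou B x)) \<and>
     (\<forall>a b x. cou B (src B a * tgt B b * x) = a * cou B x * b) \<and>
     \<comment> \<open>A-coring axioms\<close>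
     coassoc B (Hc B) (cop B) \<and> counital B (Hc B) (cop B) (cou B) \<and>
     \<comment> \<open>Delta lands in the Takeuchi product and is an algebra map\<close>
     (\<forall>x a. teq B (Hc B) (Hc B) (fpush (\<lambda>(u, v). (u * tgt B a, v)) (cop B x))
                                (fpush (\<lambda>(u, v). (u, v * src B a)) (cop B x))) \<and>
     (\<forall>x y. teq B (Hc B) (Hc B) (cop B (x * y)) (tact (Hc B) (Hc B) (cop B x) (cop B y))) \<and>
     teq B (Hc B) (Hc B) (cop B 1) (fdelta (1, 1)) \<and>
     \<comment> \<open>counit axioms\<close>
     (\<forall>x y. cou B (x * src B (cou B y)) = cou B (x * y)) \<and>
     (\<forall>x y. cou B (x * tgt B (cou B y)) = cou B (x * y)) \<and>
     cou B 1 = 1"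

definition module_coring :: "('k::field, 'a::ring_1, 'h::ring_1) bialg \<Rightarrow> ('h, 'm, 'k, 'a, 'z) hcor_scheme \<Rightarrow> bool" where
  "module_coring B C \<longleftrightarrow>
     hmodule B C \<and>
     (\<forall>c\<in>mcar C. tsum C C (mcop C c)) \<and>
     (\<forall>c\<in>mcar C. \<forall>c'\<in>mcar C. teq B C C (mcop C (madd C c c')) (\<lambda>p. mcop C c p + mcop C c' p)) \<and>
     (\<forall>h. \<forall>c\<in>mcar C. teq B C C (mcop C (mact C h c)) (tact C C (cop B h) (mcop C c))) \<and>
     (\<forall>c\<in>mcar C. \<forall>c'\<in>mcar C. mcou C (madd C c c') = mcou C c + mcou C c') \<and>
     (\<forall>h. \<forall>c\<in>mcar C. mcou C (mact C h c) = cou B (h * src B (mcou C c))) \<and>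
     coassoc B C (mcop C) \<and> counital B C (mcop C) (mcou C)"

definition mc_hom where
  "mc_hom B M N f \<longleftrightarrow>
     (\<forall>x\<in>mcar M. f x \<in> mcar N) \<and>
     (\<forall>x\<in>mcar M. \<forall>y\<in>mcar M. f (madd M x y) = madd N (f x) (f y)) \<and>
     (\<forall>h. \<forall>x\<in>mcar M. f (mact M h x) = mact N h (f x)) \<and>
     (\<forall>x\<in>mcar M. teq B N N (mcop N (f x)) (fpush (\<lambda>(u, v). (f u, f v)) (mcop M x))) \<and>
     (\<forall>x\<in>mcar M. mcou N (f x) = mcou M x)"

definition lideal_coideal :: "('k::field, 'a::ring_1, 'h::ring_1) bialg \<Rightarrow> 'h set \<Rightarrow> bool" where
  "lideal_coideal B I \<longleftrightarrow>
     0 \<in> I \<and> (\<forall>x\<in>I. \<forall>y\<in>I. x + y \<in> I) \<and> (\<forall>h. \<forall>x\<in>I. h * x \<in> I) \<and>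
     (\<forall>x\<in>I. cou B x = 0) \<and>
     (\<forall>x\<in>I. \<exists>\<psi>. tsum (Hc B) (Hc B) \<psi> \<and> fsupp \<psi> \<subseteq> (I \<times> UNIV) \<union> (UNIV \<times> I) \<and>
                 teq B (Hc B) (Hc B) (cop B x) \<psi>)"

definition qmap :: "'h::ring_1 set \<Rightarrow> 'h \<Rightarrow> 'h set" where
  "qmap I x = (\<lambda>i. x + i) ` I"

definition kerm where "kerm C \<pi> = {x. \<pi> x = mzero C}"

end

theory Submission
  imports Defs "HOL-Library.Set_Algebras"
begin

section \<open>Generic formal sums\<close>

lemma fsupp_delta: "fsupp (fdelta p :: _ \<Rightarrow> 'k::field) = {p}"
  by (auto simp: fsupp_def fdelta_def)

lemma fbind_rep:
  assumes "finite S" "fsupp \<phi> \<subseteq> S"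
  shows "fbind \<phi> F y = (\<Sum>p\<in>S. \<phi> p * F p y)"
  unfolding fbind_def
  by (rule sum.mono_neutral_left) (use assms in \<open>auto simp: fsupp_def\<close>)

lemma fpush_rep:
  assumes "finite S" "fsupp \<phi> \<subseteq> S"
  shows "fpush f \<phi> y = (\<Sum>p\<in>S. \<phi> p * fdelta (f p) y)"
  unfolding fpush_def by (rule fbind_rep[OF assms])

lemma fsupp_fpush: "fsupp (fpush f \<phi>) \<subseteq> f ` fsupp \<phi>"
  by (auto simp: fsupp_def fpush_def fbind_def fdelta_def intro!: sum.neutral)

lemma finite_fpush: "finite (fsupp \<phi>) \<Longrightarrow> finite (fsupp (fpush f \<phi>))"
  by (rule finite_subset[OF fsupp_fpush]) simp

lemma fpush_zero: "fpush f (\<lambda>_. 0) = (\<lambda>_. 0)"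
  by (simp add: fpush_def fbind_def fsupp_def)

lemma fpush_delta: "fpush f (fdelta p) = (fdelta (f p) :: _ \<Rightarrow> 'k::field)"
  by (rule ext) (subst fpush_rep[of "{p}"], simp_all add: fsupp_delta, simp add: fdelta_def)

lemma fsupp_lin: "fsupp (\<lambda>q. a * \<phi> q + b * \<psi> q) \<subseteq> fsupp \<phi> \<union> fsupp (\<psi> :: _ \<Rightarrow> 'k::field)"
  by (auto simp: fsupp_def)

lemma fpush_lin:
  fixes \<phi> \<psi> :: "_ \<Rightarrow> 'k::field"
  assumes "finite (fsupp \<phi>)" "finite (fsupp \<psi>)"
  shows "fpush f (\<lambda>q. a * \<phi> q + b * \<psi> q) = (\<lambda>y. a * fpush f \<phi> y + b * fpush f \<psi> y)"
proof
  fix y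
  let ?S = "fsupp \<phi> \<union> fsupp \<psi>"
  have "fpush f (\<lambda>q. a * \<phi> q + b * \<psi> q) y = (\<Sum>p\<in>?S. (a * \<phi> p + b * \<psi> p) * fdelta (f p) y)"
    using assms fsupp_lin[of a \<phi> b \<psi>] by (intro fpush_rep) auto
  also have "\<dots> = a * (\<Sum>p\<in>?S. \<phi> p * fdelta (f p) y) + b * (\<Sum>p\<in>?S. \<psi> p * fdelta (f p) y)"
    by (simp add: sum.distrib sum_distrib_left algebra_simps)
  also have "\<dots> = a * fpush f \<phi> y + b * fpush f \<psi> y"
    using assms by (simp add: fpush_rep[of ?S])
  finally show "fpush f (\<lambda>q. a * \<phi> q + b * \<psi> q) y = a * fpush f \<phi> y + b * fpush f \<psi> y" .
qed

lemma fpush_add: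
  fixes \<phi> \<psi> :: "_ \<Rightarrow> 'k::field"
  assumes "finite (fsupp \<phi>)" "finite (fsupp \<psi>)"
  shows "fpush f (\<lambda>q. \<phi> q + \<psi> q) = (\<lambda>y. fpush f \<phi> y + fpush f \<psi> y)"
  using fpush_lin[OF assms, of f 1 1] by simp

lemma fpush_diff:
  fixes \<phi> \<psi> :: "_ \<Rightarrow> 'k::field"
  assumes "finite (fsupp \<phi>)" "finite (fsupp \<psi>)"
  shows "fpush f (\<lambda>q. \<phi> q - \<psi> q) = (\<lambda>y. fpush f \<phi> y - fpush f \<psi> y)"
  using fpush_lin[OF assms, of f 1 "-1"] by simp

lemma fpush_addc:
  fixes \<phi> \<psi> :: "_ \<Rightarrow> 'k::field"
  assumes "finite (fsupp \<phi>)" "finite (fsupp \<psi>)"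
  shows "fpush f (\<lambda>q. \<phi> q + c * \<psi> q) = (\<lambda>y. fpush f \<phi> y + c * fpush f \<psi> y)"
  using fpush_lin[OF assms, of f 1 c] by simp

lemma fpush_smult:
  fixes \<phi> :: "_ \<Rightarrow> 'k::field"
  assumes "finite (fsupp \<phi>)"
  shows "fpush f (\<lambda>q. c * \<phi> q) = (\<lambda>y. c * fpush f \<phi> y)"
  using fpush_lin[OF assms assms, of f c 0] by simp

lemma finite_delta: "finite (fsupp (fdelta p :: _ \<Rightarrow> 'k::field))"
  by (simp add: fsupp_delta)

lemma fpush_d2c: "fpush F (\<lambda>q. fdelta a q - c * fdelta b q)
   = (\<lambda>y. fdelta (F a) y - c * (fdelta (F b) y :: 'k::field))"
  using fpush_lin[OF finite_delta finite_delta, of F 1 a "-c" b]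
  by (simp add: fpush_delta)

lemma fpush_d2: "fpush F (\<lambda>q. fdelta a q - fdelta b q)
   = (\<lambda>y. fdelta (F a) y - (fdelta (F b) y :: 'k::field))"
  using fpush_lin[OF finite_delta finite_delta, of F 1 a "-1" b]
  by (simp add: fpush_delta)

lemma fpush_d3: "fpush F (\<lambda>q. fdelta a q - fdelta b q - fdelta c q)
   = (\<lambda>y. fdelta (F a) y - fdelta (F b) y - (fdelta (F c) y :: 'k::field))"
proof -
  have fin: "finite (fsupp (\<lambda>q. fdelta a q - (fdelta b q :: 'k)))"
    by (rule finite_subset[of _ "{a,b}"]) (auto simp: fsupp_def fdelta_def)
  have "fpush F (\<lambda>q. fdelta a q - fdelta b q - fdelta c q)
     = (\<lambda>y. fpush F (\<lambda>q. fdelta a q - (fdelta b q :: 'k)) y - fpush F (fdelta c) y)"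
    by (rule fpush_diff[OF fin finite_delta])
  then show ?thesis
    by (simp add: fpush_diff[OF finite_delta finite_delta] fpush_delta)
qed

lemma fbind_push:
  fixes \<phi> :: "_ \<Rightarrow> 'k::field"
  assumes fin: "finite (fsupp \<phi>)"
  shows "fbind (fpush f \<phi>) F = fbind \<phi> (\<lambda>p. F (f p))"
proof
  fix y
  let ?S = "fsupp \<phi>" let ?T = "f ` fsupp \<phi>"
  have "fbind (fpush f \<phi>) F y = (\<Sum>P\<in>?T. fpush f \<phi> P * F P y)"
    using fin fsupp_fpush[of f \<phi>] by (intro fbind_rep) auto
  also have "\<dots> = (\<Sum>P\<in>?T. \<Sum>p\<in>?S. \<phi> p * fdelta (f p) P * F P y)"
    using fin by (simp add: fpush_rep[of ?S] sum_distrib_right)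
  also have "\<dots> = (\<Sum>p\<in>?S. \<Sum>P\<in>?T. \<phi> p * fdelta (f p) P * F P y)"
    by (rule sum.swap)
  also have "\<dots> = (\<Sum>p\<in>?S. \<phi> p * F (f p) y)"
  proof (intro sum.cong refl)
    fix p assume p: "p \<in> ?S"
    have "(\<Sum>P\<in>?T. \<phi> p * fdelta (f p) P * F P y) = (\<Sum>P\<in>?T. if f p = P then \<phi> p * F P y else 0)"
      by (intro sum.cong) (auto simp: fdelta_def)
    also have "\<dots> = \<phi> p * F (f p) y" using fin p by (simp add: sum.delta)
    finally show "(\<Sum>P\<in>?T. \<phi> p * fdelta (f p) P * F P y) = \<phi> p * F (f p) y" .
  qed
  also have "\<dots> = fbind \<phi> (\<lambda>p. F (f p)) y" by (simp add: fbind_def)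
  finally show "fbind (fpush f \<phi>) F y = fbind \<phi> (\<lambda>p. F (f p)) y" .
qed

lemma fpush_comp:
  fixes \<phi> :: "_ \<Rightarrow> 'k::field"
  assumes "finite (fsupp \<phi>)"
  shows "fpush g (fpush f \<phi>) = fpush (\<lambda>p. g (f p)) \<phi>"
  unfolding fpush_def[of g] using fbind_push[OF assms] by (simp add: fpush_def)

lemma fpush_cong:
  "(\<And>p. p \<in> fsupp \<phi> \<Longrightarrow> f p = g p) \<Longrightarrow> fpush f \<phi> = fpush g \<phi>"
  unfolding fpush_def fbind_def by (intro ext sum.cong) auto

lemma fsupp_fbind: "fsupp (fbind \<Phi> F) \<subseteq> (\<Union>p\<in>fsupp \<Phi>. fsupp (F p))"
  by (auto simp: fsupp_def fbind_def intro!: sum.neutral)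

lemma finite_fbind:
  "finite (fsupp \<Phi>) \<Longrightarrow> (\<And>p. p \<in> fsupp \<Phi> \<Longrightarrow> finite (fsupp (F p))) \<Longrightarrow> finite (fsupp (fbind \<Phi> F))"
  by (rule finite_subset[OF fsupp_fbind]) auto

lemma fpush_fbind:
  fixes \<Phi> :: "_ \<Rightarrow> 'k::field"
  assumes fin: "finite (fsupp \<Phi>)" and finF: "\<And>p. p \<in> fsupp \<Phi> \<Longrightarrow> finite (fsupp (F p))"
  shows "fpush f (fbind \<Phi> F) = fbind \<Phi> (\<lambda>p. fpush f (F p))"
proof
  fix y
  let ?U = "\<Union>p\<in>fsupp \<Phi>. fsupp (F p)"
  have U: "finite ?U" using fin finF by auto
  have "fpush f (fbind \<Phi> F) y = (\<Sum>z\<in>?U. fbind \<Phi> F z * fdelta (f z) y)"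
    using U fsupp_fbind[of \<Phi> F] by (intro fpush_rep) auto
  also have "\<dots> = (\<Sum>z\<in>?U. \<Sum>p\<in>fsupp \<Phi>. \<Phi> p * F p z * fdelta (f z) y)"
    by (simp add: fbind_def sum_distrib_right)
  also have "\<dots> = (\<Sum>p\<in>fsupp \<Phi>. \<Phi> p * (\<Sum>z\<in>?U. F p z * fdelta (f z) y))"
    by (subst sum.swap) (simp add: sum_distrib_left mult.assoc)
  also have "\<dots> = (\<Sum>p\<in>fsupp \<Phi>. \<Phi> p * fpush f (F p) y)"
    using U by (intro sum.cong refl) (subst fpush_rep[of ?U], auto)
  also have "\<dots> = fbind \<Phi> (\<lambda>p. fpush f (F p)) y" by (simp add: fbind_def)
  finally show "fpush f (fbind \<Phi> F) y = fbind \<Phi> (\<lambda>p. fpush f (F p)) y" .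
qed

lemma fbind_diff: "fbind \<Phi> (\<lambda>p y. F p y - G p y) = (\<lambda>y. fbind \<Phi> F y - fbind \<Phi> G y)"
  by (simp add: fbind_def sum_subtractf right_diff_distrib)

lemma fun_rep:
  fixes \<phi> :: "_ \<Rightarrow> 'k::field"
  assumes "finite S" "fsupp \<phi> \<subseteq> S"
  shows "\<phi> y = (\<Sum>p\<in>S. \<phi> p * fdelta p y)"
proof -
  have "(\<Sum>p\<in>S. \<phi> p * fdelta p y) = (\<Sum>p\<in>S. if p = y then \<phi> y else 0)"
    by (intro sum.cong) (auto simp: fdelta_def)
  also have "\<dots> = \<phi> y" using assms by (auto simp: sum.delta' fsupp_def)
  finally show ?thesis by simp
qed

lemma fold_plus_sum:
  fixes g :: "_ \<Rightarrow> 'b::comm_monoid_add"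
  assumes "finite S"
  shows "Finite_Set.fold (\<lambda>x acc. g x + acc) z S = z + sum g S"
proof -
  interpret comp_fun_commute "\<lambda>x acc. g x + acc"
    by standard (auto simp: add_ac)
  show ?thesis using assms
    by (induction S rule: finite_induct) (simp_all add: fold_insert add.left_commute)
qed

section \<open>Null elements of tensor products\<close>

lemma fin_d3: "finite (fsupp (\<lambda>q. fdelta a q - fdelta b q - (fdelta c q :: 'k::field)))"
  by (rule finite_subset[of _ "{a,b,c}"]) (auto simp: fsupp_def fdelta_def)

lemma fin_d2c: "finite (fsupp (\<lambda>q. fdelta a q - (c::'k::field) * fdelta b q))"
  by (rule finite_subset[of _ "{a,b}"]) (auto simp: fsupp_def fdelta_def)

lemma fin_d2: "finite (fsupp (\<lambda>q. fdelta a q - (fdelta b q :: 'k::field)))"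
  by (rule finite_subset[of _ "{a,b}"]) (auto simp: fsupp_def fdelta_def)

lemma tgen_finite: "g \<in> tgen B M N \<Longrightarrow> finite (fsupp g)"
  unfolding tgen_def by (auto simp: fin_d3 fin_d2c fin_d2)

lemma tgen3_finite: "g \<in> tgen3 B M N P \<Longrightarrow> finite (fsupp g)"
  unfolding tgen3_def by (auto simp: fin_d3 fin_d2c fin_d2)

lemma tnull_finite: "tnull B M N \<phi> \<Longrightarrow> finite (fsupp \<phi>)"
proof (induction rule: tnull.induct)
  case tnull_zero then show ?case by (simp add: fsupp_def)
next
  case (tnull_step g \<phi> c)
  have "fsupp (\<lambda>p. \<phi> p + c * g p) \<subseteq> fsupp \<phi> \<union> fsupp g" by (auto simp: fsupp_def)
  then show ?case using tnull_step tgen_finite by (meson finite_Un finite_subset)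
qed

lemma tnull3_finite: "tnull3 B M N P \<phi> \<Longrightarrow> finite (fsupp \<phi>)"
proof (induction rule: tnull3.induct)
  case tnull3_zero then show ?case by (simp add: fsupp_def)
next
  case (tnull3_step g \<phi> c)
  have "fsupp (\<lambda>p. \<phi> p + c * g p) \<subseteq> fsupp \<phi> \<union> fsupp g" by (auto simp: fsupp_def)
  then show ?case using tnull3_step tgen3_finite by (meson finite_Un finite_subset)
qed

lemma tnull_add:
  assumes "tnull B M N \<phi>" "tnull B M N \<psi>"
  shows "tnull B M N (\<lambda>p. \<phi> p + \<psi> p)"
  using assms(2)
proof induction
  case tnull_zero then show ?case using assms(1) by simp
next
  case (tnull_step g \<psi> c)
  then have "tnull B M N (\<lambda>p. (\<phi> p + \<psi> p) + c * g p)" by (intro tnull.intros(2))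
  then show ?case by (simp add: add.assoc)
qed

lemma tnull3_add:
  assumes "tnull3 B M N P \<phi>" "tnull3 B M N P \<psi>"
  shows "tnull3 B M N P (\<lambda>p. \<phi> p + \<psi> p)"
  using assms(2)
proof induction
  case tnull3_zero then show ?case using assms(1) by simp
next
  case (tnull3_step g \<psi> c)
  then have "tnull3 B M N P (\<lambda>p. (\<phi> p + \<psi> p) + c * g p)" by (intro tnull3.intros(2))
  then show ?case by (simp add: add.assoc)
qed

lemma tnull_smult:
  assumes "tnull B M N \<phi>"
  shows "tnull B M N (\<lambda>p. c * \<phi> p)"
  using assms
proof induction
  case tnull_zero then show ?case by (simp add: tnull.intros(1))
next
  case (tnull_step g \<phi> d)
  then have "tnull B M N (\<lambda>p. c * \<phi> p + (c * d) * g p)" by (intro tnull.intros(2))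
  then show ?case by (simp add: algebra_simps)
qed

lemma tnull3_smult:
  assumes "tnull3 B M N P \<phi>"
  shows "tnull3 B M N P (\<lambda>p. c * \<phi> p)"
  using assms
proof induction
  case tnull3_zero then show ?case by (simp add: tnull3.intros(1))
next
  case (tnull3_step g \<phi> d)
  then have "tnull3 B M N P (\<lambda>p. c * \<phi> p + (c * d) * g p)" by (intro tnull3.intros(2))
  then show ?case by (simp add: algebra_simps)
qed

lemma tnull_gen: "g \<in> tgen B M N \<Longrightarrow> tnull B M N g"
  using tnull.intros(2)[OF _ tnull.intros(1), of g B M N 1] by simp

lemma tnull3_gen: "g \<in> tgen3 B M N P \<Longrightarrow> tnull3 B M N P g"
  using tnull3.intros(2)[OF _ tnull3.intros(1), of g B M N P 1] by simp

lemma tnull_diff: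
  "tnull B M N \<phi> \<Longrightarrow> tnull B M N \<psi> \<Longrightarrow> tnull B M N (\<lambda>p. \<phi> p - \<psi> p)"
  using tnull_add[of B M N \<phi> "\<lambda>p. (-1) * \<psi> p"] tnull_smult[of B M N \<psi> "-1"] by simp

lemma tnull3_diff:
  "tnull3 B M N P \<phi> \<Longrightarrow> tnull3 B M N P \<psi> \<Longrightarrow> tnull3 B M N P (\<lambda>p. \<phi> p - \<psi> p)"
  using tnull3_add[of B M N P \<phi> "\<lambda>p. (-1) * \<psi> p"] tnull3_smult[of B M N P \<psi> "-1"] by simp

lemma tnull_sum:
  assumes "finite S" "\<And>i. i \<in> S \<Longrightarrow> tnull B M N (F i)"
  shows "tnull B M N (\<lambda>p. \<Sum>i\<in>S. c i * F i p)"
  using assms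
proof (induction S rule: finite_induct)
  case empty then show ?case by (simp add: tnull.intros(1))
next
  case (insert x S)
  then have "tnull B M N (\<lambda>p. c x * F x p + (\<Sum>i\<in>S. c i * F i p))"
    by (intro tnull_add tnull_smult) auto
  then show ?case using insert by simp
qed

lemma tnull3_sum:
  assumes "finite S" "\<And>i. i \<in> S \<Longrightarrow> tnull3 B M N P (F i)"
  shows "tnull3 B M N P (\<lambda>p. \<Sum>i\<in>S. c i * F i p)"
  using assms
proof (induction S rule: finite_induct)
  case empty then show ?case by (simp add: tnull3.intros(1))
next
  case (insert x S)
  then have "tnull3 B M N P (\<lambda>p. c x * F x p + (\<Sum>i\<in>S. c i * F i p))"
    by (intro tnull3_add tnull3_smult) auto
  then show ?case using insert by simp
qed

lemma tnull_fbind: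
  "(\<And>p. p \<in> fsupp \<Phi> \<Longrightarrow> tnull B M N (F p)) \<Longrightarrow> finite (fsupp \<Phi>) \<Longrightarrow> tnull B M N (fbind \<Phi> F)"
  unfolding fbind_def by (rule tnull_sum)

lemma tnull3_fbind:
  "(\<And>p. p \<in> fsupp \<Phi> \<Longrightarrow> tnull3 B M N P (F p)) \<Longrightarrow> finite (fsupp \<Phi>) \<Longrightarrow> tnull3 B M N P (fbind \<Phi> F)"
  unfolding fbind_def by (rule tnull3_sum)

lemma teq_refl: "teq B M N \<phi> \<phi>"
  unfolding teq_def using tnull.intros(1) by simp

lemma teq_sym: "teq B M N \<phi> \<psi> \<Longrightarrow> teq B M N \<psi> \<phi>"
  unfolding teq_def using tnull_smult[of B M N "\<lambda>p. \<phi> p - \<psi> p" "-1"] by simp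

lemma teq_trans: "teq B M N \<phi> \<psi> \<Longrightarrow> teq B M N \<psi> \<chi> \<Longrightarrow> teq B M N \<phi> \<chi>"
  unfolding teq_def using tnull_add[of B M N "\<lambda>p. \<phi> p - \<psi> p" "\<lambda>p. \<psi> p - \<chi> p"] by simp

lemma teq_add: "teq B M N \<phi> \<psi> \<Longrightarrow> teq B M N \<phi>' \<psi>' \<Longrightarrow>
   teq B M N (\<lambda>p. \<phi> p + \<phi>' p) (\<lambda>p. \<psi> p + \<psi>' p)"
  unfolding teq_def using tnull_add[of B M N "\<lambda>p. \<phi> p - \<psi> p" "\<lambda>p. \<phi>' p - \<psi>' p"]
  by (simp add: algebra_simps)

lemma teq3_refl: "teq3 B M N P \<phi> \<phi>"
  unfolding teq3_def using tnull3.intros(1) by simp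

lemma teq3_sym: "teq3 B M N P \<phi> \<psi> \<Longrightarrow> teq3 B M N P \<psi> \<phi>"
  unfolding teq3_def using tnull3_smult[of B M N P "\<lambda>p. \<phi> p - \<psi> p" "-1"] by simp

lemma teq3_trans: "teq3 B M N P \<phi> \<psi> \<Longrightarrow> teq3 B M N P \<psi> \<chi> \<Longrightarrow> teq3 B M N P \<phi> \<chi>"
  unfolding teq3_def using tnull3_add[of B M N P "\<lambda>p. \<phi> p - \<psi> p" "\<lambda>p. \<psi> p - \<chi> p"] by simp

lemma teq_fbind:
  "(\<And>p. p \<in> fsupp \<Phi> \<Longrightarrow> teq B M N (F p) (G p)) \<Longrightarrow> finite (fsupp \<Phi>) \<Longrightarrow>
   teq B M N (fbind \<Phi> F) (fbind \<Phi> G)"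
  unfolding teq_def fbind_diff[symmetric] by (rule tnull_fbind)

lemma teq3_fbind:
  "(\<And>p. p \<in> fsupp \<Phi> \<Longrightarrow> teq3 B M N P (F p) (G p)) \<Longrightarrow> finite (fsupp \<Phi>) \<Longrightarrow>
   teq3 B M N P (fbind \<Phi> F) (fbind \<Phi> G)"
  unfolding teq3_def fbind_diff[symmetric] by (rule tnull3_fbind)

definition mmap :: "('h, 'm, 'z1) hmod_scheme \<Rightarrow> ('h, 'n, 'z2) hmod_scheme \<Rightarrow> ('m \<Rightarrow> 'n) \<Rightarrow> bool" where
  "mmap M M' f \<longleftrightarrow> (\<forall>x\<in>mcar M. f x \<in> mcar M') \<and>
     (\<forall>x\<in>mcar M. \<forall>y\<in>mcar M. f (madd M x y) = madd M' (f x) (f y)) \<and>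
     (\<forall>h. \<forall>x\<in>mcar M. f (mact M h x) = mact M' h (f x))"

lemma mmapD:
  assumes "mmap M M' f"
  shows "x \<in> mcar M \<Longrightarrow> f x \<in> mcar M'"
    and "x \<in> mcar M \<Longrightarrow> y \<in> mcar M \<Longrightarrow> f (madd M x y) = madd M' (f x) (f y)"
    and "x \<in> mcar M \<Longrightarrow> f (mact M h x) = mact M' h (f x)"
    and "x \<in> mcar M \<Longrightarrow> f (msc B M c x) = msc B M' c (f x)"
  using assms by (auto simp: mmap_def msc_def)

lemma tgenI1:
  "m \<in> mcar M \<Longrightarrow> m' \<in> mcar M \<Longrightarrow> n \<in> mcar N \<Longrightarrow>
   (\<lambda>q. fdelta (madd M m m', n) q - fdelta (m, n) q - fdelta (m', n) q) \<in> tgen B M N"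
  unfolding tgen_def by (rule UnI1, rule UnI1, rule UnI1, rule UnI1, blast)

lemma tgenI2:
  "m \<in> mcar M \<Longrightarrow> n \<in> mcar N \<Longrightarrow> n' \<in> mcar N \<Longrightarrow>
   (\<lambda>q. fdelta (m, madd N n n') q - fdelta (m, n) q - fdelta (m, n') q) \<in> tgen B M N"
  unfolding tgen_def by (rule UnI1, rule UnI1, rule UnI1, rule UnI2, blast)

lemma tgenI3:
  "m \<in> mcar M \<Longrightarrow> n \<in> mcar N \<Longrightarrow>
   (\<lambda>q. fdelta (msc B M c m, n) q - c * fdelta (m, n) q) \<in> tgen B M N"
  unfolding tgen_def by (rule UnI1, rule UnI1, rule UnI2, blast)

lemma tgenI4:
  "m \<in> mcar M \<Longrightarrow> n \<in> mcar N \<Longrightarrow>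
   (\<lambda>q. fdelta (m, msc B N c n) q - c * fdelta (m, n) q) \<in> tgen B M N"
  unfolding tgen_def by (rule UnI1, rule UnI2, blast)

lemma tgenI5:
  "m \<in> mcar M \<Longrightarrow> n \<in> mcar N \<Longrightarrow>
   (\<lambda>q. fdelta (mact M (tgt B a) m, n) q - fdelta (m, mact N (src B a) n) q) \<in> tgen B M N"
  unfolding tgen_def by (rule UnI2, blast)

lemmas tgenI = tgenI1 tgenI2 tgenI3 tgenI4 tgenI5


lemma tgen3I1:
  "m \<in> mcar M \<Longrightarrow> m' \<in> mcar M \<Longrightarrow> n \<in> mcar N \<Longrightarrow> r \<in> mcar P \<Longrightarrow>
   (\<lambda>q. fdelta (madd M m m', n, r) q - fdelta (m, n, r) q - fdelta (m', n, r) q) \<in> tgen3 B M N P"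
  unfolding tgen3_def by (rule UnI1, rule UnI1, rule UnI1, rule UnI1, rule UnI1, rule UnI1, rule UnI1, blast)

lemma tgen3I2:
  "m \<in> mcar M \<Longrightarrow> n \<in> mcar N \<Longrightarrow> n' \<in> mcar N \<Longrightarrow> r \<in> mcar P \<Longrightarrow>
   (\<lambda>q. fdelta (m, madd N n n', r) q - fdelta (m, n, r) q - fdelta (m, n', r) q) \<in> tgen3 B M N P"
  unfolding tgen3_def by (rule UnI1, rule UnI1, rule UnI1, rule UnI1, rule UnI1, rule UnI1, rule UnI2, blast)

lemma tgen3I3:
  "m \<in> mcar M \<Longrightarrow> n \<in> mcar N \<Longrightarrow> r \<in> mcar P \<Longrightarrow> r' \<in> mcar P \<Longrightarrow>
   (\<lambda>q. fdelta (m, n, madd P r r') q - fdelta (m, n, r) q - fdelta (m, n, r') q) \<in> tgen3 B M N P"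
  unfolding tgen3_def by (rule UnI1, rule UnI1, rule UnI1, rule UnI1, rule UnI1, rule UnI2, blast)

lemma tgen3I4:
  "m \<in> mcar M \<Longrightarrow> n \<in> mcar N \<Longrightarrow> r \<in> mcar P \<Longrightarrow>
   (\<lambda>q. fdelta (msc B M c m, n, r) q - c * fdelta (m, n, r) q) \<in> tgen3 B M N P"
  unfolding tgen3_def by (rule UnI1, rule UnI1, rule UnI1, rule UnI1, rule UnI2, blast)

lemma tgen3I5:
  "m \<in> mcar M \<Longrightarrow> n \<in> mcar N \<Longrightarrow> r \<in> mcar P \<Longrightarrow>
   (\<lambda>q. fdelta (m, msc B N c n, r) q - c * fdelta (m, n, r) q) \<in> tgen3 B M N P"
  unfolding tgen3_def by (rule UnI1, rule UnI1, rule UnI1, rule UnI2, blast)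

lemma tgen3I6:
  "m \<in> mcar M \<Longrightarrow> n \<in> mcar N \<Longrightarrow> r \<in> mcar P \<Longrightarrow>
   (\<lambda>q. fdelta (m, n, msc B P c r) q - c * fdelta (m, n, r) q) \<in> tgen3 B M N P"
  unfolding tgen3_def by (rule UnI1, rule UnI1, rule UnI2, blast)

lemma tgen3I7:
  "m \<in> mcar M \<Longrightarrow> n \<in> mcar N \<Longrightarrow> r \<in> mcar P \<Longrightarrow>
   (\<lambda>q. fdelta (mact M (tgt B a) m, n, r) q - fdelta (m, mact N (src B a) n, r) q) \<in> tgen3 B M N P"
  unfolding tgen3_def by (rule UnI1, rule UnI2, blast)

lemma tgen3I8:
  "m \<in> mcar M \<Longrightarrow> n \<in> mcar N \<Longrightarrow> r \<in> mcar P \<Longrightarrow>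
   (\<lambda>q. fdelta (m, mact N (tgt B a) n, r) q - fdelta (m, n, mact P (src B a) r) q) \<in> tgen3 B M N P"
  unfolding tgen3_def by (rule UnI2, blast)

lemmas tgen3I = tgen3I1 tgen3I2 tgen3I3 tgen3I4 tgen3I5 tgen3I6 tgen3I7 tgen3I8


lemma tgen_push:
  assumes g: "g \<in> tgen B M N" and f: "mmap M M' f" and f': "mmap N N' f'"
  shows "fpush (\<lambda>(x,y). (f x, f' y)) g \<in> tgen B M' N'"
  using g[unfolded tgen_def]
  by (elim UnE CollectE exE conjE; hypsubst;
      simp add: fpush_d3 fpush_d2c fpush_d2 mmapD[OF f] mmapD[OF f'] tgenI)

lemma tgen3_push:
  assumes g: "g \<in> tgen3 B M N P" and f: "mmap M M' f" and f': "mmap N N' f'" and f'': "mmap P P' f''"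
  shows "fpush (\<lambda>(x,y,z). (f x, f' y, f'' z)) g \<in> tgen3 B M' N' P'"
  using g[unfolded tgen3_def]
  by (elim UnE CollectE exE conjE; hypsubst;
      simp add: fpush_d3 fpush_d2c fpush_d2 mmapD[OF f] mmapD[OF f'] mmapD[OF f''] tgen3I)

lemma tgen_slice3:
  assumes g: "g \<in> tgen B M N" and v: "v \<in> mcar P"
  shows "fpush (\<lambda>(x,y). (x, y, v)) g \<in> tgen3 B M N P"
  using g[unfolded tgen_def]
  by (elim UnE CollectE exE conjE; hypsubst; simp add: fpush_d3 fpush_d2c fpush_d2 tgen3I v)

lemma tgen_slice1:
  assumes g: "g \<in> tgen B N P" and u: "u \<in> mcar M"
  shows "fpush (\<lambda>(x,y). (u, x, y)) g \<in> tgen3 B M N P"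
  using g[unfolded tgen_def]
  by (elim UnE CollectE exE conjE; hypsubst; simp add: fpush_d3 fpush_d2c fpush_d2 tgen3I u)

lemma tnull_push:
  assumes "tnull B M N \<phi>" and f: "mmap M M' f" and f': "mmap N N' f'"
  shows "tnull B M' N' (fpush (\<lambda>(x,y). (f x, f' y)) \<phi>)"
  using assms(1)
proof induction
  case tnull_zero show ?case by (simp add: fpush_zero tnull.intros(1))
next
  case (tnull_step g \<phi> c)
  have "fpush (\<lambda>(x,y). (f x, f' y)) (\<lambda>p. \<phi> p + c * g p)
      = (\<lambda>y. fpush (\<lambda>(x,y). (f x, f' y)) \<phi> y + c * fpush (\<lambda>(x,y). (f x, f' y)) g y)"
    by (rule fpush_addc[OF tnull_finite[OF tnull_step(2)] tgen_finite[OF tnull_step(1)]])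
  then show ?case using tnull.intros(2)[OF tgen_push[OF tnull_step(1) f f'] tnull_step(3)] by simp
qed

lemma tnull3_push:
  assumes "tnull3 B M N P \<phi>" and f: "mmap M M' f" and f': "mmap N N' f'" and f'': "mmap P P' f''"
  shows "tnull3 B M' N' P' (fpush (\<lambda>(x,y,z). (f x, f' y, f'' z)) \<phi>)"
  using assms(1)
proof induction
  case tnull3_zero show ?case by (simp add: fpush_zero tnull3.intros(1))
next
  case (tnull3_step g \<phi> c)
  have "fpush (\<lambda>(x,y,z). (f x, f' y, f'' z)) (\<lambda>p. \<phi> p + c * g p)
      = (\<lambda>y. fpush (\<lambda>(x,y,z). (f x, f' y, f'' z)) \<phi> y + c * fpush (\<lambda>(x,y,z). (f x, f' y, f'' z)) g y)"
    by (rule fpush_addc[OF tnull3_finite[OF tnull3_step(2)] tgen3_finite[OF tnull3_step(1)]])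
  then show ?case using tnull3.intros(2)[OF tgen3_push[OF tnull3_step(1) f f' f''] tnull3_step(3)] by simp
qed

lemma tnull_slice3:
  assumes "tnull B M N \<phi>" and v: "v \<in> mcar P"
  shows "tnull3 B M N P (fpush (\<lambda>(x,y). (x, y, v)) \<phi>)"
  using assms(1)
proof induction
  case tnull_zero show ?case by (simp add: fpush_zero tnull3.intros(1))
next
  case (tnull_step g \<phi> c)
  have "fpush (\<lambda>(x,y). (x, y, v)) (\<lambda>p. \<phi> p + c * g p)
      = (\<lambda>y. fpush (\<lambda>(x,y). (x, y, v)) \<phi> y + c * fpush (\<lambda>(x,y). (x, y, v)) g y)"
    by (rule fpush_addc[OF tnull_finite[OF tnull_step(2)] tgen_finite[OF tnull_step(1)]])
  then show ?case using tnull3.intros(2)[OF tgen_slice3[OF tnull_step(1) v] tnull_step(3)] by simp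
qed

lemma tnull_slice1:
  assumes "tnull B N P \<phi>" and u: "u \<in> mcar M"
  shows "tnull3 B M N P (fpush (\<lambda>(x,y). (u, x, y)) \<phi>)"
  using assms(1)
proof induction
  case tnull_zero show ?case by (simp add: fpush_zero tnull3.intros(1))
next
  case (tnull_step g \<phi> c)
  have "fpush (\<lambda>(x,y). (u, x, y)) (\<lambda>p. \<phi> p + c * g p)
      = (\<lambda>y. fpush (\<lambda>(x,y). (u, x, y)) \<phi> y + c * fpush (\<lambda>(x,y). (u, x, y)) g y)"
    by (rule fpush_addc[OF tnull_finite[OF tnull_step(2)] tgen_finite[OF tnull_step(1)]])
  then show ?case using tnull3.intros(2)[OF tgen_slice1[OF tnull_step(1) u] tnull_step(3)] by simp
qed

lemma teq_push:
  assumes "teq B M N a b" "finite (fsupp a)" "finite (fsupp b)" "mmap M M' f" "mmap N N' f'"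
  shows "teq B M' N' (fpush (\<lambda>(x,y). (f x, f' y)) a) (fpush (\<lambda>(x,y). (f x, f' y)) b)"
  unfolding teq_def by (subst fpush_diff[OF assms(2,3), symmetric]) (rule tnull_push[OF assms(1)[unfolded teq_def] assms(4,5)])

lemma teq3_push:
  assumes "teq3 B M N P a b" "finite (fsupp a)" "finite (fsupp b)" "mmap M M' f" "mmap N N' f'" "mmap P P' f''"
  shows "teq3 B M' N' P' (fpush (\<lambda>(x,y,z). (f x, f' y, f'' z)) a) (fpush (\<lambda>(x,y,z). (f x, f' y, f'' z)) b)"
  unfolding teq3_def by (subst fpush_diff[OF assms(2,3), symmetric]) (rule tnull3_push[OF assms(1)[unfolded teq3_def] assms(4,5,6)])

lemma teq_slice3:
  assumes "teq B M N a b" "finite (fsupp a)" "finite (fsupp b)" "v \<in> mcar P"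
  shows "teq3 B M N P (fpush (\<lambda>(x,y). (x, y, v)) a) (fpush (\<lambda>(x,y). (x, y, v)) b)"
  unfolding teq3_def by (subst fpush_diff[OF assms(2,3), symmetric]) (rule tnull_slice3[OF assms(1)[unfolded teq_def] assms(4)])

lemma teq_slice1:
  assumes "teq B N P a b" "finite (fsupp a)" "finite (fsupp b)" "u \<in> mcar M"
  shows "teq3 B M N P (fpush (\<lambda>(x,y). (u, x, y)) a) (fpush (\<lambda>(x,y). (u, x, y)) b)"
  unfolding teq3_def by (subst fpush_diff[OF assms(2,3), symmetric]) (rule tnull_slice1[OF assms(1)[unfolded teq_def] assms(4)])

lemma hmod_zero_add: "hmodule B M \<Longrightarrow> madd M (mzero M) (mzero M) = mzero M"
  by (simp add: hmodule_def)

lemma hmod_cancel: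
  assumes M: "hmodule B M" and z: "z \<in> mcar M" and y: "y \<in> mcar M" and e: "madd M z y = y"
  shows "z = mzero M"
proof -
  have "\<forall>x\<in>mcar M. \<exists>y\<in>mcar M. madd M x y = mzero M" using M by (simp add: hmodule_def)
  with y obtain y' where y': "y' \<in> mcar M" "madd M y y' = mzero M" by blast
  have "madd M (madd M z y) y' = mzero M" using e y' by simp
  then have "madd M z (madd M y y') = mzero M" using M z y y' unfolding hmodule_def by metis
  then have "madd M z (mzero M) = mzero M" using y' by simp
  moreover have "madd M z (mzero M) = z" using M z unfolding hmodule_def by metis
  ultimately show ?thesis by simp
qed

lemma tnull_zero_left:
  assumes M: "hmodule B M" and n: "n \<in> mcar N"
  shows "tnull B M N (fdelta (mzero M, n))"
proof -
  have z: "mzero M \<in> mcar M" using M by (simp add: hmodule_def)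
  have "tnull B M N (\<lambda>q. fdelta (madd M (mzero M) (mzero M), n) q - fdelta (mzero M, n) q - fdelta (mzero M, n) q)"
    by (rule tnull_gen[OF tgenI1[OF z z n]])
  then have "tnull B M N (\<lambda>q. - fdelta (mzero M, n) q)"
    using hmod_zero_add[OF M] by simp
  from tnull_smult[OF this, of "-1"] show ?thesis by simp
qed

lemma tnull_zero_right:
  assumes N: "hmodule B N" and m: "m \<in> mcar M"
  shows "tnull B M N (fdelta (m, mzero N))"
proof -
  have z: "mzero N \<in> mcar N" using N by (simp add: hmodule_def)
  have "tnull B M N (\<lambda>q. fdelta (m, madd N (mzero N) (mzero N)) q - fdelta (m, mzero N) q - fdelta (m, mzero N) q)"
    by (rule tnull_gen[OF tgenI2[OF m z z]])
  then have "tnull B M N (\<lambda>q. - fdelta (m, mzero N) q)"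
    using hmod_zero_add[OF N] by simp
  from tnull_smult[OF this, of "-1"] show ?thesis by simp
qed

lemma Hc_simps [simp]:
  "mcar (Hc B) = UNIV" "madd (Hc B) = (+)" "mzero (Hc B) = 0" "mact (Hc B) = (*)"
  "mcop (Hc B) = cop B" "mcou (Hc B) = cou B"
  by (simp_all add: Hc_def)

lemma msc_Hc [simp]: "msc B (Hc B) c x = scH B c 1 * x"
  by (simp add: msc_def)

lemma mmap_Hc: "mmap (Hc B) C f \<longleftrightarrow> (\<forall>x. f x \<in> mcar C) \<and> (\<forall>x y. f (x + y) = madd C (f x) (f y))
   \<and> (\<forall>h x. f (h * x) = mact C h (f x))"
  by (simp add: mmap_def)

lemma mc_homD:
  assumes "mc_hom B (Hc B) C f"
  shows "f x \<in> mcar C" "f (x + y) = madd C (f x) (f y)" "f (h * x) = mact C h (f x)"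
    "teq B C C (mcop C (f x)) (fpush (\<lambda>(u, v). (f u, f v)) (cop B x))"
    "mcou C (f x) = cou B x" "mmap (Hc B) C f"
  using assms by (simp_all add: mc_hom_def mmap_def)

lemma bialgD:
  assumes "bialgebroid B"
  shows "finite (fsupp (cop B x))"
    "teq B (Hc B) (Hc B) (cop B (x + y)) (\<lambda>p. cop B x p + cop B y p)"
    "teq B (Hc B) (Hc B) (cop B (x * y)) (tact (Hc B) (Hc B) (cop B x) (cop B y))"
    "cou B (x + y) = cou B x + cou B y"
    "cou B (x * src B (cou B y)) = cou B (x * y)"
    "cou B (x * tgt B (cou B y)) = cou B (x * y)"
    "coassoc B (Hc B) (cop B)" "counital B (Hc B) (cop B) (cou B)"
    "kalg (scH B)"
  using assms unfolding bialgebroid_def tsum_def by simp_all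

section \<open>Kernels of quotient module corings\<close>

lemma lift_gen:
  assumes f: "mc_hom B (Hc B) C \<pi>" and sur: "range \<pi> = mcar C" and g: "g \<in> tgen B C C"
  shows "\<exists>g'. g' \<in> tgen B (Hc B) (Hc B) \<and> fpush (\<lambda>(x,y). (\<pi> x, \<pi> y)) g' = g"
proof -
  note h = mc_homD[OF f]
  have pre: "\<And>m. m \<in> mcar C \<Longrightarrow> \<exists>a. m = \<pi> a" using sur by auto
  show ?thesis
    using g[unfolded tgen_def]
    apply (elim UnE CollectE exE conjE)
    subgoal premises prems for m m' n
    proof -
      obtain a b c where e: "m = \<pi> a" "m' = \<pi> b" "n = \<pi> c" using pre prems by meson
      show ?thesis
        apply (rule exI[of _ "\<lambda>q. fdelta (a + b, c) q - fdelta (a, c) q - fdelta (b, c) q"])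
        using tgenI1[of a "Hc B" b c "Hc B" B] by (simp add: fpush_d3 h prems e)
    qed
    subgoal premises prems for m n n'
    proof -
      obtain a b c where e: "m = \<pi> a" "n = \<pi> b" "n' = \<pi> c" using pre prems by meson
      show ?thesis
        apply (rule exI[of _ "\<lambda>q. fdelta (a, b + c) q - fdelta (a, b) q - fdelta (a, c) q"])
        using tgenI2[of a "Hc B" b "Hc B" c B] by (simp add: fpush_d3 h prems e)
    qed
    subgoal premises prems for c m n
    proof -
      obtain a b where e: "m = \<pi> a" "n = \<pi> b" using pre prems by meson
      show ?thesis
        apply (rule exI[of _ "\<lambda>q. fdelta (scH B c 1 * a, b) q - c * fdelta (a, b) q"])
        using tgenI3[of a "Hc B" b "Hc B" B c] by (simp add: fpush_d2c h msc_def prems e)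
    qed
    subgoal premises prems for c m n
    proof -
      obtain a b where e: "m = \<pi> a" "n = \<pi> b" using pre prems by meson
      show ?thesis
        apply (rule exI[of _ "\<lambda>q. fdelta (a, scH B c 1 * b) q - c * fdelta (a, b) q"])
        using tgenI4[of a "Hc B" b "Hc B" B c] by (simp add: fpush_d2c h msc_def prems e)
    qed
    subgoal premises prems for e m n
    proof -
      obtain a b where e: "m = \<pi> a" "n = \<pi> b" using pre prems by meson
      show ?thesis
        apply (rule exI[of _ "\<lambda>q. fdelta (tgt B e * a, b) q - fdelta (a, src B e * b) q"])
        using tgenI5[of a "Hc B" b "Hc B" B e] by (simp add: fpush_d2 h prems e)
    qed
    done
qed

lemma lift_tnull:
  assumes f: "mc_hom B (Hc B) C \<pi>" and sur: "range \<pi> = mcar C" and "tnull B C C \<chi>"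
  shows "\<exists>\<theta>. tnull B (Hc B) (Hc B) \<theta> \<and> fpush (\<lambda>(x,y). (\<pi> x, \<pi> y)) \<theta> = \<chi>"
  using assms(3)
proof induction
  case tnull_zero
  show ?case by (rule exI[of _ "\<lambda>_. 0"]) (simp add: tnull.intros(1) fpush_zero)
next
  case (tnull_step g \<phi> c)
  from tnull_step(3) obtain \<theta> where th: "tnull B (Hc B) (Hc B) \<theta>" "fpush (\<lambda>(x,y). (\<pi> x, \<pi> y)) \<theta> = \<phi>"
    by blast
  from lift_gen[OF f sur tnull_step(1)] obtain g' where
    g': "g' \<in> tgen B (Hc B) (Hc B)" "fpush (\<lambda>(x,y). (\<pi> x, \<pi> y)) g' = g" by blast
  have "fpush (\<lambda>(x,y). (\<pi> x, \<pi> y)) (\<lambda>p. \<theta> p + c * g' p)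
     = (\<lambda>y. fpush (\<lambda>(x,y). (\<pi> x, \<pi> y)) \<theta> y + c * fpush (\<lambda>(x,y). (\<pi> x, \<pi> y)) g' y)"
    by (rule fpush_addc[OF tnull_finite[OF th(1)] tgen_finite[OF g'(1)]])
  then show ?case
    using tnull.intros(2)[OF g'(1) th(1), of c] th(2) g'(2) by (intro exI[of _ "\<lambda>p. \<theta> p + c * g' p"]) simp
qed

lemma ker_diff:
  assumes C: "hmodule B C" and f: "mc_hom B (Hc B) C \<pi>" and e: "\<pi> u = \<pi> w"
  shows "\<pi> (u - w) = mzero C"
proof -
  note h = mc_homD[OF f]
  have "madd C (\<pi> (u - w)) (\<pi> w) = \<pi> w" using h(2)[of "u - w" w] e by simp
  then show ?thesis using hmod_cancel[OF C h(1) h(1)] by blast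
qed

lemma split_kernel:
  fixes B :: "('k::field, 'a::ring_1, 'h::ring_1) bialg" and \<phi> :: "'h \<times> 'h \<Rightarrow> 'k"
  assumes C: "hmodule B C" and f: "mc_hom B (Hc B) C \<pi>"
    and fin: "finite (fsupp \<phi>)" and p0: "fpush (\<lambda>(x,y). (\<pi> x, \<pi> y)) \<phi> = (\<lambda>_. 0)"
  shows "\<exists>\<psi>. finite (fsupp \<psi>) \<and> fsupp \<psi> \<subseteq> (kerm C \<pi> \<times> UNIV) \<union> (UNIV \<times> kerm C \<pi>)
     \<and> tnull B (Hc B) (Hc B) (\<lambda>p. \<phi> p - \<psi> p)"
proof -
  note h = mc_homD[OF f]
  define R where "R c = (SOME x. \<pi> x = c)" for c
  have R: "\<pi> (R (\<pi> x)) = \<pi> x" for x unfolding R_def by (rule someI_ex) blast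
  define u' where "u' p = R (\<pi> (fst p))" for p :: "'h \<times> 'h"
  define v' where "v' p = R (\<pi> (snd p))" for p :: "'h \<times> 'h"
  let ?S = "fsupp \<phi>"
  define \<psi> where "\<psi> = (\<lambda>y. \<Sum>p\<in>?S. \<phi> p * (fdelta (fst p - u' p, snd p) y + fdelta (u' p, snd p - v' p) y))"
  define G where "G p = (\<lambda>y. fdelta p y - fdelta (fst p - u' p, snd p) y - fdelta (u' p, snd p - v' p) y
       - (fdelta (u' p, v' p) y :: 'k))" for p
  have G: "tnull B (Hc B) (Hc B) (G p)" for p
  proof -
    have g1: "tnull B (Hc B) (Hc B) (\<lambda>q. fdelta (u' p + (fst p - u' p), snd p) q - fdelta (u' p, snd p) q
        - fdelta (fst p - u' p, snd p) q)"
      using tnull_gen[OF tgenI1[of "u' p" "Hc B" "fst p - u' p" "snd p" "Hc B" B]] by simp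
    have g2: "tnull B (Hc B) (Hc B) (\<lambda>q. fdelta (u' p, v' p + (snd p - v' p)) q - fdelta (u' p, v' p) q
        - fdelta (u' p, snd p - v' p) q)"
      using tnull_gen[OF tgenI2[of "u' p" "Hc B" "v' p" "Hc B" "snd p - v' p" B]] by simp
    from tnull_add[OF g1 g2] show ?thesis unfolding G_def by (simp add: algebra_simps)
  qed
  have "tnull B (Hc B) (Hc B) (\<lambda>y. \<Sum>p\<in>?S. \<phi> p * G p y)"
    by (rule tnull_sum[OF fin G])
  moreover have "(\<Sum>p\<in>?S. \<phi> p * G p y) = \<phi> y - \<psi> y" for y
  proof -
    have kap: "(\<lambda>p. (u' p, v' p)) = (\<lambda>p. (\<lambda>(x,y). (R x, R y)) ((\<lambda>(x,y). (\<pi> x, \<pi> y)) p))"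
      by (auto simp: u'_def v'_def fun_eq_iff)
    have e1: "(\<Sum>p\<in>?S. \<phi> p * G p y) = (\<Sum>p\<in>?S. \<phi> p * fdelta p y
        - \<phi> p * (fdelta (fst p - u' p, snd p) y + fdelta (u' p, snd p - v' p) y)
        - \<phi> p * fdelta (u' p, v' p) y)"
      by (intro sum.cong refl) (simp only: G_def right_diff_distrib distrib_left diff_diff_eq)
    have e2: "\<dots> = (\<Sum>p\<in>?S. \<phi> p * fdelta p y) - \<psi> y - (\<Sum>p\<in>?S. \<phi> p * fdelta (u' p, v' p) y)"
      by (simp only: sum_subtractf \<psi>_def)
    have e3: "(\<Sum>p\<in>?S. \<phi> p * fdelta p y) = \<phi> y" by (rule fun_rep[OF fin order_refl, symmetric])
    have e4: "(\<Sum>p\<in>?S. \<phi> p * fdelta (u' p, v' p) y) = fpush (\<lambda>p. (u' p, v' p)) \<phi> y"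
      by (rule fpush_rep[OF fin, symmetric]) simp
    have e5: "fpush (\<lambda>p. (u' p, v' p)) \<phi> = fpush (\<lambda>(x,y). (R x, R y)) (fpush (\<lambda>(x,y). (\<pi> x, \<pi> y)) \<phi>)"
      by (simp only: kap fpush_comp[OF fin])
    have e6: "fpush (\<lambda>(x,y). (R x, R y)) (fpush (\<lambda>(x,y). (\<pi> x, \<pi> y)) \<phi>) y = 0"
      by (simp add: p0 fpush_zero)
    show ?thesis unfolding e1 e2 e3 e4 e5 e6 by simp
  qed
  ultimately have "tnull B (Hc B) (Hc B) (\<lambda>p. \<phi> p - \<psi> p)" by simp
  moreover have sub: "fsupp \<psi> \<subseteq> (\<lambda>p. (fst p - u' p, snd p)) ` ?S \<union> (\<lambda>p. (u' p, snd p - v' p)) ` ?S"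
  proof
    fix y assume "y \<in> fsupp \<psi>"
    then have ne: "\<psi> y \<noteq> 0" by (simp add: fsupp_def)
    show "y \<in> (\<lambda>p. (fst p - u' p, snd p)) ` ?S \<union> (\<lambda>p. (u' p, snd p - v' p)) ` ?S"
    proof (rule ccontr)
      assume "y \<notin> (\<lambda>p. (fst p - u' p, snd p)) ` ?S \<union> (\<lambda>p. (u' p, snd p - v' p)) ` ?S"
      then have "\<forall>p\<in>?S. fdelta (fst p - u' p, snd p) y + fdelta (u' p, snd p - v' p) y = (0::'k)"
        by (auto simp: fdelta_def)
      then have "\<psi> y = 0" by (simp add: \<psi>_def)
      with ne show False by simp
    qed
  qed
  moreover have "finite (fsupp \<psi>)" using finite_subset[OF sub] fin by blast
  moreover have "fsupp \<psi> \<subseteq> (kerm C \<pi> \<times> UNIV) \<union> (UNIV \<times> kerm C \<pi>)"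
  proof -
    have "\<pi> (fst p - u' p) = mzero C" "\<pi> (snd p - v' p) = mzero C" for p
      unfolding u'_def v'_def using ker_diff[OF C f] R by metis+
    then show ?thesis using sub by (auto simp: kerm_def)
  qed
  ultimately show ?thesis by blast
qed

lemma mcD:
  assumes "module_coring B C"
  shows "hmodule B C" "c \<in> mcar C \<Longrightarrow> finite (fsupp (mcop C c))"
    "c \<in> mcar C \<Longrightarrow> c' \<in> mcar C \<Longrightarrow> teq B C C (mcop C (madd C c c')) (\<lambda>p. mcop C c p + mcop C c' p)"
    "c \<in> mcar C \<Longrightarrow> c' \<in> mcar C \<Longrightarrow> mcou C (madd C c c') = mcou C c + mcou C c'"
  using assms unfolding module_coring_def tsum_def by simp_all

lemma lic_neg: "lideal_coideal B I \<Longrightarrow> x \<in> I \<Longrightarrow> - x \<in> I"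
  unfolding lideal_coideal_def by (metis mult_minus1)

lemma lic_add: "lideal_coideal B I \<Longrightarrow> x \<in> I \<Longrightarrow> y \<in> I \<Longrightarrow> x + y \<in> I"
  unfolding lideal_coideal_def by blast

lemma lic_diff: "lideal_coideal B I \<Longrightarrow> x \<in> I \<Longrightarrow> y \<in> I \<Longrightarrow> x - y \<in> I"
  using lic_add[of B I x "- y"] lic_neg[of B I y] by simp

lemma lic_zero: "lideal_coideal B I \<Longrightarrow> 0 \<in> I"
  unfolding lideal_coideal_def by blast

lemma lic_mult: "lideal_coideal B I \<Longrightarrow> x \<in> I \<Longrightarrow> h * x \<in> I"
  unfolding lideal_coideal_def by blast

lemma lic_cou: "lideal_coideal B I \<Longrightarrow> x \<in> I \<Longrightarrow> cou B x = 0"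
  unfolding lideal_coideal_def by blast

lemma lic_sum:
  assumes "lideal_coideal B I" "finite S" "\<And>i. i \<in> S \<Longrightarrow> f i \<in> I"
  shows "sum f S \<in> I"
  using assms(2,3) by (induction S rule: finite_induct) (auto intro: lic_zero[OF assms(1)] lic_add[OF assms(1)])

lemma qmap_eq:
  assumes I: "lideal_coideal B I"
  shows "qmap I x = qmap I y \<longleftrightarrow> x - y \<in> I"
proof
  assume e: "qmap I x = qmap I y"
  have "x \<in> qmap I x" using lic_zero[OF I] unfolding qmap_def by force
  then obtain i where "i \<in> I" "x = y + i" using e unfolding qmap_def by auto
  then show "x - y \<in> I" by simp
next
  assume d: "x - y \<in> I"
  have "qmap I x \<subseteq> qmap I y" if d: "x - y \<in> I" for x y
  proof
    fix z assume "z \<in> qmap I x"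
    then obtain i where i: "i \<in> I" "z = x + i" unfolding qmap_def by auto
    then have "(x - y) + i \<in> I" using lic_add[OF I d] by blast
    moreover have "z = y + ((x - y) + i)" using i by simp
    ultimately show "z \<in> qmap I y" unfolding qmap_def by blast
  qed
  moreover have "y - x \<in> I" using lic_neg[OF I d] by simp
  ultimately show "qmap I x = qmap I y" using d by blast
qed

lemma qmap_add:
  assumes I: "lideal_coideal B I"
  shows "qmap I x + qmap I y = qmap I (x + y)"
proof
  show "qmap I x + qmap I y \<subseteq> qmap I (x + y)"
    unfolding qmap_def set_plus_def using lic_add[OF I] by (auto simp: algebra_simps)
  show "qmap I (x + y) \<subseteq> qmap I x + qmap I y"
    unfolding qmap_def set_plus_def using lic_zero[OF I] by (auto simp: algebra_simps) (metis add.assoc add_0)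
qed

lemma qmap_zero: "lideal_coideal B I \<Longrightarrow> qmap I 0 = I"
  by (simp add: qmap_def)

lemma qmap_ker: "lideal_coideal B I \<Longrightarrow> qmap I x = I \<longleftrightarrow> x \<in> I"
  using qmap_eq[of B I x 0] qmap_zero[of B I] by simp

lemma hom_zero:
  assumes C: "hmodule B C" and f: "mc_hom B (Hc B) C \<pi>"
  shows "\<pi> 0 = mzero C"
proof -
  note h = mc_homD[OF f]
  have "madd C (\<pi> 0) (\<pi> 0) = \<pi> 0" using h(2)[of 0 0] by simp
  then show ?thesis using hmod_cancel[OF C h(1) h(1)] by blast
qed

lemma act_zero:
  assumes C: "hmodule B C"
  shows "mact C h (mzero C) = mzero C"
proof -
  have z: "mzero C \<in> mcar C" and a: "mact C h (mzero C) \<in> mcar C" using C by (auto simp: hmodule_def)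
  have "\<forall>h. \<forall>x\<in>mcar C. \<forall>y\<in>mcar C. mact C h (madd C x y) = madd C (mact C h x) (mact C h y)"
    using C by (simp add: hmodule_def)
  then have "mact C h (madd C (mzero C) (mzero C)) = madd C (mact C h (mzero C)) (mact C h (mzero C))"
    using z by blast
  then have "madd C (mact C h (mzero C)) (mact C h (mzero C)) = mact C h (mzero C)"
    using hmod_zero_add[OF C] by simp
  then show ?thesis using hmod_cancel[OF C a a] by blast
qed

lemma part2_coideal:
  fixes B :: "('k::field, 'a::ring_1, 'h::ring_1) bialg"
  assumes B: "bialgebroid B" and C: "module_coring B C" and f: "mc_hom B (Hc B) C \<pi>"
    and sur: "range \<pi> = mcar C"
  shows "lideal_coideal B (kerm C \<pi>)"
proof -
  note h = mc_homD[OF f]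
  note c = mcD[OF C]
  have CM: "hmodule B C" by (rule c(1))
  have z: "mzero C \<in> mcar C" using CM by (simp add: hmodule_def)
  let ?K = "kerm C \<pi>"
  have k0: "0 \<in> ?K" using hom_zero[OF CM f] by (simp add: kerm_def)
  have kadd: "\<forall>x\<in>?K. \<forall>y\<in>?K. x + y \<in> ?K"
    using h(2) hmod_zero_add[OF CM] by (simp add: kerm_def)
  have kmult: "\<forall>h. \<forall>x\<in>?K. h * x \<in> ?K"
    using h(3) act_zero[OF CM] by (simp add: kerm_def)
  have mcou0: "mcou C (mzero C) = 0"
    using c(4)[OF z z] hmod_zero_add[OF CM] by simp
  have kcou: "\<forall>x\<in>?K. cou B x = 0"
  proof
    fix x assume "x \<in> ?K"
    then have "\<pi> x = mzero C" by (simp add: kerm_def)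
    then show "cou B x = 0" using h(5)[of x] mcou0 by simp
  qed
  have mcop0: "tnull B C C (mcop C (mzero C))"
  proof -
    have "tnull B C C (\<lambda>p. mcop C (mzero C) p - (mcop C (mzero C) p + mcop C (mzero C) p))"
      using c(3)[OF z z] hmod_zero_add[OF CM] by (simp add: teq_def)
    then have "tnull B C C (\<lambda>p. - mcop C (mzero C) p)" by simp
    from tnull_smult[OF this, of "-1"] show ?thesis by simp
  qed
  have kco: "\<exists>\<psi>. tsum (Hc B) (Hc B) \<psi> \<and> fsupp \<psi> \<subseteq> (?K \<times> UNIV) \<union> (UNIV \<times> ?K) \<and>
                 teq B (Hc B) (Hc B) (cop B x) \<psi>" if x: "x \<in> ?K" for x
  proof -
    have px: "\<pi> x = mzero C" using x by (simp add: kerm_def)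
    let ?P = "fpush (\<lambda>(u, v). (\<pi> u, \<pi> v)) (cop B x)"
    have "tnull B C C (\<lambda>p. mcop C (mzero C) p - (mcop C (mzero C) p - ?P p))"
      using tnull_diff[OF mcop0 h(4)[of x, unfolded teq_def px]] .
    then have "tnull B C C ?P" by simp
    from lift_tnull[OF f sur this] obtain \<theta> where
      th: "tnull B (Hc B) (Hc B) \<theta>" "fpush (\<lambda>(u, v). (\<pi> u, \<pi> v)) \<theta> = ?P" by blast
    have fx: "finite (fsupp (cop B x))" by (rule bialgD(1)[OF B])
    have ft: "finite (fsupp \<theta>)" by (rule tnull_finite[OF th(1)])
    have fin: "finite (fsupp (\<lambda>p. cop B x p - \<theta> p))"
      by (rule finite_subset[of _ "fsupp (cop B x) \<union> fsupp \<theta>"]) (use fx ft in \<open>auto simp: fsupp_def\<close>)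
    have p0: "fpush (\<lambda>(u, v). (\<pi> u, \<pi> v)) (\<lambda>p. cop B x p - \<theta> p) = (\<lambda>_. 0)"
      using fpush_diff[OF fx ft, of "\<lambda>(u, v). (\<pi> u, \<pi> v)"] th(2) by simp
    from split_kernel[OF CM f fin p0] obtain \<psi> where
      ps: "finite (fsupp \<psi>)" "fsupp \<psi> \<subseteq> (?K \<times> UNIV) \<union> (UNIV \<times> ?K)"
          "tnull B (Hc B) (Hc B) (\<lambda>p. (cop B x p - \<theta> p) - \<psi> p)" by blast
    have "teq B (Hc B) (Hc B) (cop B x) \<psi>"
      using tnull_add[OF ps(3) th(1)] unfolding teq_def by simp
    moreover have "tsum (Hc B) (Hc B) \<psi>" using ps(1) by (simp add: tsum_def)
    ultimately show ?thesis using ps(2) by blast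
  qed
  show ?thesis unfolding lideal_coideal_def using k0 kadd kmult kcou kco by blast
qed

lemma part2_iso:
  fixes B :: "('k::field, 'a::ring_1, 'h::ring_1) bialg"
  assumes B: "bialgebroid B" and C: "module_coring B C" and f: "mc_hom B (Hc B) C \<pi>"
    and sur: "range \<pi> = mcar C"
    and Qc: "mcar Q = range (qmap (kerm C \<pi>))" and Qm: "module_coring B Q"
    and Qh: "mc_hom B (Hc B) Q (qmap (kerm C \<pi>))"
  shows "\<exists>\<phi>. mc_hom B Q C \<phi> \<and> bij_betw \<phi> (mcar Q) (mcar C) \<and> (\<forall>x. \<phi> (qmap (kerm C \<pi>) x) = \<pi> x)"
proof -
  let ?K = "kerm C \<pi>" let ?q = "qmap (kerm C \<pi>)"
  note h = mc_homD[OF f]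
  note hq = mc_homD[OF Qh]
  have CM: "hmodule B C" by (rule mcD(1)[OF C])
  have I: "lideal_coideal B ?K" by (rule part2_coideal[OF B C f sur])
  have qeq: "?q x = ?q y \<longleftrightarrow> \<pi> x = \<pi> y" for x y
  proof
    assume "?q x = ?q y"
    then have "\<pi> (x - y) = mzero C" using qmap_eq[OF I] by (simp add: kerm_def)
    then have "\<pi> x = madd C (mzero C) (\<pi> y)" using h(2)[of "x - y" y] by simp
    then show "\<pi> x = \<pi> y" using CM h(1)[of y] by (simp add: hmodule_def)
  next
    assume "\<pi> x = \<pi> y"
    then show "?q x = ?q y" using qmap_eq[OF I] ker_diff[OF CM f] by (simp add: kerm_def)
  qed
  define \<phi> where "\<phi> X = \<pi> (SOME x. ?q x = X)" for X
  have phq: "\<phi> (?q x) = \<pi> x" for x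
  proof -
    have "?q (SOME x'. ?q x' = ?q x) = ?q x" by (rule someI_ex) blast
    then show ?thesis unfolding \<phi>_def using qeq by blast
  qed
  have mm: "mmap Q C \<phi>"
    unfolding mmap_def Qc using phq h(1) hq(2)[symmetric] hq(3)[symmetric] h(2) h(3)
    by (auto simp: phq)
  have hom: "mc_hom B Q C \<phi>"
    unfolding mc_hom_def
  proof (intro conjI ballI allI)
    fix X assume "X \<in> mcar Q"
    then obtain x where X: "X = ?q x" using Qc by auto
    show "\<phi> X \<in> mcar C" using mmapD(1)[OF mm] \<open>X \<in> mcar Q\<close> .
    show "mcou C (\<phi> X) = mcou Q X" using X phq h(5) hq(5) by simp
    have fQ: "finite (fsupp (mcop Q X))" using mcD(2)[OF Qm \<open>X \<in> mcar Q\<close>] .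
    have fx: "finite (fsupp (cop B x))" by (rule bialgD(1)[OF B])
    have fP: "finite (fsupp (fpush (\<lambda>(u, v). (?q u, ?q v)) (cop B x)))" by (rule finite_fpush[OF fx])
    have "teq B C C (fpush (\<lambda>(u, v). (\<phi> u, \<phi> v)) (mcop Q X))
        (fpush (\<lambda>(u, v). (\<phi> u, \<phi> v)) (fpush (\<lambda>(u, v). (?q u, ?q v)) (cop B x)))"
      using teq_push[OF hq(4)[of x] _ fP mm mm] fQ X by simp
    also have "fpush (\<lambda>(u, v). (\<phi> u, \<phi> v)) (fpush (\<lambda>(u, v). (?q u, ?q v)) (cop B x))
       = fpush (\<lambda>(u, v). (\<pi> u, \<pi> v)) (cop B x)"
    proof -
      have e: "(\<lambda>p. (\<lambda>(u, v). (\<phi> u, \<phi> v)) ((\<lambda>(u, v). (?q u, ?q v)) p)) = (\<lambda>(u, v). (\<pi> u, \<pi> v))"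
        by (auto simp: phq fun_eq_iff)
      show ?thesis by (subst fpush_comp[OF fx]) (simp only: e)
    qed
    finally have "teq B C C (fpush (\<lambda>(u, v). (\<phi> u, \<phi> v)) (mcop Q X)) (fpush (\<lambda>(u, v). (\<pi> u, \<pi> v)) (cop B x))" .
    then show "teq B C C (mcop C (\<phi> X)) (fpush (\<lambda>(u, v). (\<phi> u, \<phi> v)) (mcop Q X))"
      using teq_trans[OF h(4)[of x] teq_sym] X phq by simp
  qed (use mmapD[OF mm] in auto)
  have bij: "bij_betw \<phi> (mcar Q) (mcar C)"
    unfolding bij_betw_def
  proof
    show "inj_on \<phi> (mcar Q)" unfolding Qc inj_on_def using phq qeq by auto
    show "\<phi> ` mcar Q = mcar C" unfolding Qc sur[symmetric] using phq by (auto simp: image_iff)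
  qed
  show ?thesis using hom bij phq by blast
qed

section \<open>The quotient module coring H/I\<close>

definition qrep :: "'h::ring_1 set \<Rightarrow> 'h set \<Rightarrow> 'h" where
  "qrep I X = (SOME x. qmap I x = X)"

definition Qc :: "('k::field, 'a, 'h::ring_1) bialg \<Rightarrow> 'h set \<Rightarrow> ('h, 'h set, 'k, 'a) hcor" where
  "Qc B I = \<lparr>mcar = range (qmap I), madd = (+), mzero = I,
     mact = (\<lambda>h X. qmap I (h * qrep I X)),
     mcop = (\<lambda>X. fpush (\<lambda>(u, v). (qmap I u, qmap I v)) (cop B (qrep I X))),
     mcou = (\<lambda>X. cou B (qrep I X))\<rparr>"

lemma Qc_simps [simp]:
  "mcar (Qc B I) = range (qmap I)" "madd (Qc B I) = (+)" "mzero (Qc B I) = I"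
  "mact (Qc B I) h X = qmap I (h * qrep I X)"
  "mcop (Qc B I) X = fpush (\<lambda>(u, v). (qmap I u, qmap I v)) (cop B (qrep I X))"
  "mcou (Qc B I) X = cou B (qrep I X)"
  by (simp_all add: Qc_def)

context
  fixes B :: "('k::field, 'a::ring_1, 'h::ring_1) bialg" and I :: "'h set"
  assumes B: "bialgebroid B" and I: "lideal_coideal B I"
begin

abbreviation "q \<equiv> qmap I"
abbreviation "Q \<equiv> Qc B I"

lemma qrep_q: "q (qrep I (q x)) = q x"
  unfolding qrep_def by (rule someI_ex) blast

lemma qrep_diff: "qrep I (q x) - x \<in> I"
  using qrep_q qmap_eq[OF I] by blast

lemma q_eqI: "x - y \<in> I \<Longrightarrow> q x = q y"
  using qmap_eq[OF I] by blast

lemma mact_q: "mact Q h (q x) = q (h * x)"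
proof -
  have "h * qrep I (q x) - h * x = h * (qrep I (q x) - x)" by (simp add: algebra_simps)
  then show ?thesis using lic_mult[OF I qrep_diff] q_eqI by simp
qed

lemma cou_q: "cou B (qrep I (q x)) = cou B x"
proof -
  have "cou B (x + (qrep I (q x) - x)) = cou B x + cou B (qrep I (q x) - x)" by (rule bialgD(4)[OF B])
  then show ?thesis by (simp add: lic_cou[OF I qrep_diff])
qed

lemma mcou_q: "mcou Q (q x) = cou B x"
  using cou_q by simp

lemma q_add: "q x + q y = q (x + y)"
  by (rule qmap_add[OF I])

lemma q_zero: "q 0 = I"
  by (rule qmap_zero[OF I])

lemma hmod_Q: "hmodule B Q"
  unfolding hmodule_def
proof (intro conjI)
  show "mzero Q \<in> mcar Q" using q_zero by (auto simp: image_iff)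
  show "\<forall>x\<in>mcar Q. \<forall>y\<in>mcar Q. madd Q x y \<in> mcar Q" by (auto simp: q_add)
  show "\<forall>h. \<forall>x\<in>mcar Q. mact Q h x \<in> mcar Q" by auto
  show "\<forall>x\<in>mcar Q. \<forall>y\<in>mcar Q. \<forall>z\<in>mcar Q. madd Q (madd Q x y) z = madd Q x (madd Q y z)"
    by (simp add: add.assoc)
  show "\<forall>x\<in>mcar Q. \<forall>y\<in>mcar Q. madd Q x y = madd Q y x" by (simp add: add.commute)
  show "\<forall>x\<in>mcar Q. madd Q (mzero Q) x = x"
  proof
    fix X assume "X \<in> mcar Q"
    then obtain x where "X = q x" by auto
    then show "madd Q (mzero Q) X = X" using q_zero q_add[of 0 x] by simp
  qed
  show "\<forall>x\<in>mcar Q. \<exists>y\<in>mcar Q. madd Q x y = mzero Q" using q_zero q_add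
    by (auto, metis rangeI right_minus)
  show "\<forall>x\<in>mcar Q. mact Q 1 x = x" using qrep_q by auto
  show "\<forall>h g. \<forall>x\<in>mcar Q. mact Q (h * g) x = mact Q h (mact Q g x)"
    using mact_q by (auto simp: mult.assoc)
  show "\<forall>h g. \<forall>x\<in>mcar Q. mact Q (h + g) x = madd Q (mact Q h x) (mact Q g x)"
    using mact_q q_add by (auto simp: distrib_right)
  show "\<forall>h. \<forall>x\<in>mcar Q. \<forall>y\<in>mcar Q. mact Q h (madd Q x y) = madd Q (mact Q h x) (mact Q h y)"
  proof (intro allI ballI)
    fix h X Y assume "X \<in> mcar Q" "Y \<in> mcar Q"
    then obtain x y where xy: "X = q x" "Y = q y" by auto
    show "mact Q h (madd Q X Y) = madd Q (mact Q h X) (mact Q h Y)"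
      unfolding xy using mact_q[of h "x + y"] mact_q[of h x] mact_q[of h y] q_add[of x y]
        q_add[of "h * x" "h * y"]
      by (simp del: Qc_simps(4) add: distrib_left)
  qed
qed

lemma mmap_q: "mmap (Hc B) Q q"
  unfolding mmap_Hc using mact_q q_add by auto

lemma fin_mcop: "finite (fsupp (mcop Q X))"
  using finite_fpush[OF bialgD(1)[OF B]] by simp

lemma K1: "teq B Q Q (mcop Q (q x)) (fpush (\<lambda>(u, v). (q u, q v)) (cop B x))"
proof -
  define r where "r = qrep I (q x)"
  define i where "i = r - x"
  have i: "i \<in> I" unfolding i_def r_def by (rule qrep_diff)
  let ?P = "fpush (\<lambda>(u, v). (q u, q v))"
  have fr: "finite (fsupp (cop B r))" and fx: "finite (fsupp (cop B x))" and fi: "finite (fsupp (cop B i))"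
    by (rule bialgD(1)[OF B])+
  have fxi: "finite (fsupp (\<lambda>p. cop B x p + cop B i p))"
    by (rule finite_subset[of _ "fsupp (cop B x) \<union> fsupp (cop B i)"]) (use fx fi in \<open>auto simp: fsupp_def\<close>)
  have "teq B (Hc B) (Hc B) (cop B r) (\<lambda>p. cop B x p + cop B i p)"
    using bialgD(2)[OF B, of x i] by (simp add: i_def)
  from teq_push[OF this fr fxi mmap_q mmap_q]
  have e1: "teq B Q Q (?P (cop B r)) (\<lambda>y. ?P (cop B x) y + ?P (cop B i) y)"
    by (simp add: fpush_add[OF fx fi])
  from I i obtain \<psi> where ps: "tsum (Hc B) (Hc B) \<psi>" "fsupp \<psi> \<subseteq> (I \<times> UNIV) \<union> (UNIV \<times> I)"
      "teq B (Hc B) (Hc B) (cop B i) \<psi>"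
    unfolding lideal_coideal_def by blast
  have fps: "finite (fsupp \<psi>)" using ps(1) by (simp add: tsum_def)
  have e2: "teq B Q Q (?P (cop B i)) (?P \<psi>)" by (rule teq_push[OF ps(3) fi fps mmap_q mmap_q])
  have n: "tnull B Q Q (?P \<psi>)"
  proof -
    have "tnull B Q Q (\<lambda>y. \<Sum>p\<in>fsupp \<psi>. \<psi> p * fdelta ((\<lambda>(u, v). (q u, q v)) p) y)"
    proof (rule tnull_sum[OF fps])
      fix p assume p: "p \<in> fsupp \<psi>"
      obtain u v where uv: "p = (u, v)" by fastforce
      show "tnull B Q Q (fdelta ((\<lambda>(u, v). (q u, q v)) p))"
      proof (cases "u \<in> I")
        case True
        then have "q u = mzero Q" using qmap_ker[OF I] by simp
        then show ?thesis using tnull_zero_left[OF hmod_Q, of "q v" Q] uv by simp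
      next
        case False
        then have "v \<in> I" using p ps(2) uv by auto
        then have "q v = mzero Q" using qmap_ker[OF I] by simp
        then show ?thesis using tnull_zero_right[OF hmod_Q, of "q u" Q] uv by simp
      qed
    qed
    moreover have "fpush (\<lambda>(u, v). (q u, q v)) \<psi> = (\<lambda>y. \<Sum>p\<in>fsupp \<psi>. \<psi> p * fdelta ((\<lambda>(u, v). (q u, q v)) p) y)"
      by (rule ext) (rule fpush_rep[OF fps order_refl])
    ultimately show ?thesis by simp
  qed
  have "tnull B Q Q (\<lambda>y. ?P (cop B i) y)"
    using tnull_add[OF e2[unfolded teq_def] n] by simp
  then have "teq B Q Q (\<lambda>y. ?P (cop B x) y + ?P (cop B i) y) (?P (cop B x))"
    unfolding teq_def by simp
  from teq_trans[OF e1 this] show ?thesis by (simp add: r_def)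
qed

end

lemma msum_Hc: "finite S \<Longrightarrow> msum (Hc B) f S = sum f S"
  unfolding msum_def by (simp add: fold_plus_sum)

lemma msum_Qc: "finite S \<Longrightarrow> msum (Qc B I) f S = I + sum f S"
  unfolding msum_def by (simp add: fold_plus_sum)

lemma fin_tact:
  fixes \<Phi> :: "_ \<Rightarrow> 'k::field"
  shows "finite (fsupp \<Phi>) \<Longrightarrow> finite (fsupp \<psi>) \<Longrightarrow> finite (fsupp (tact M N \<Phi> \<psi>))"
  unfolding tact_def by (intro finite_fbind) (auto simp: finite_fpush split: prod.splits)

context
  fixes B :: "('k::field, 'a::ring_1, 'h::ring_1) bialg" and I :: "'h set"
  assumes B: "bialgebroid B" and I: "lideal_coideal B I"
begin

abbreviation "qq \<equiv> qmap I"
abbreviation "QQ \<equiv> Qc B I"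

lemma tsum_Q: "tsum QQ QQ (mcop QQ X)"
proof -
  have "fsupp (mcop QQ X) \<subseteq> (\<lambda>(u, v). (qq u, qq v)) ` fsupp (cop B (qrep I X))"
    using fsupp_fpush by simp
  also have "\<dots> \<subseteq> range qq \<times> range qq" by auto
  finally show ?thesis unfolding tsum_def using fin_mcop[OF B I] by simp
qed

lemma mcop_add: "teq B QQ QQ (mcop QQ (qq x + qq y)) (\<lambda>p. mcop QQ (qq x) p + mcop QQ (qq y) p)"
proof -
  let ?P = "fpush (\<lambda>(u, v). (qq u, qq v))"
  have fx: "finite (fsupp (cop B x))" and fy: "finite (fsupp (cop B y))" and fxy: "finite (fsupp (cop B (x + y)))"
    by (rule bialgD(1)[OF B])+
  have fs: "finite (fsupp (\<lambda>p. cop B x p + cop B y p))"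
    by (rule finite_subset[of _ "fsupp (cop B x) \<union> fsupp (cop B y)"]) (use fx fy in \<open>auto simp: fsupp_def\<close>)
  have a: "teq B QQ QQ (mcop QQ (qq (x + y))) (?P (cop B (x + y)))" by (rule K1[OF B I])
  have b: "teq B QQ QQ (?P (cop B (x + y))) (\<lambda>p. ?P (cop B x) p + ?P (cop B y) p)"
    using teq_push[OF bialgD(2)[OF B, of x y] fxy fs mmap_q[OF B I] mmap_q[OF B I]]
    by (simp add: fpush_add[OF fx fy])
  have c: "teq B QQ QQ (\<lambda>p. mcop QQ (qq x) p + mcop QQ (qq y) p) (\<lambda>p. ?P (cop B x) p + ?P (cop B y) p)"
    by (rule teq_add[OF K1[OF B I] K1[OF B I]])
  show ?thesis using teq_trans[OF teq_trans[OF a b] teq_sym[OF c]] q_add[OF B I] by simp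
qed

lemma tact_push:
  fixes \<Phi> \<psi> :: "'h \<times> 'h \<Rightarrow> 'k"
  assumes f\<Phi>: "finite (fsupp \<Phi>)" and f\<psi>: "finite (fsupp \<psi>)"
  shows "tact QQ QQ \<Phi> (fpush (\<lambda>(u, v). (qq u, qq v)) \<psi>)
       = fpush (\<lambda>(u, v). (qq u, qq v)) (tact (Hc B) (Hc B) \<Phi> \<psi>)"
proof -
  have inner: "fpush (\<lambda>(x, y). (mact QQ u x, mact QQ v y)) (fpush (\<lambda>(u, v). (qq u, qq v)) \<psi>)
     = fpush (\<lambda>(u, v). (qq u, qq v)) (fpush (\<lambda>(x, y). (u * x, v * y)) \<psi>)" for u v
  proof -
    have e: "(\<lambda>p. (\<lambda>(x, y). (mact QQ u x, mact QQ v y)) ((\<lambda>(u, v). (qq u, qq v)) p))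
       = (\<lambda>p. (\<lambda>(u, v). (qq u, qq v)) ((\<lambda>(x, y). (u * x, v * y)) p))"
      using mact_q[OF B I] by (auto simp: fun_eq_iff simp del: Qc_simps(4))
    show ?thesis by (simp only: fpush_comp[OF f\<psi>] e)
  qed
  have fin: "finite (fsupp ((\<lambda>(u, v). fpush (\<lambda>(x, y). (u * x, v * y)) \<psi>) p))" for p
    by (auto simp: finite_fpush[OF f\<psi>] split: prod.splits)
  have "tact QQ QQ \<Phi> (fpush (\<lambda>(u, v). (qq u, qq v)) \<psi>)
      = fbind \<Phi> (\<lambda>(u, v). fpush (\<lambda>(u, v). (qq u, qq v)) (fpush (\<lambda>(x, y). (u * x, v * y)) \<psi>))"
    unfolding tact_def by (simp only: inner)
  also have "\<dots> = fbind \<Phi> (\<lambda>p. fpush (\<lambda>(u, v). (qq u, qq v)) ((\<lambda>(u, v). fpush (\<lambda>(x, y). (u * x, v * y)) \<psi>) p))"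
    by (intro arg_cong[where f="fbind \<Phi>"] ext) (simp add: split_beta)
  also have "\<dots> = fpush (\<lambda>(u, v). (qq u, qq v)) (tact (Hc B) (Hc B) \<Phi> \<psi>)"
    unfolding tact_def Hc_simps by (rule fpush_fbind[OF f\<Phi> fin, symmetric])
  finally show ?thesis .
qed

lemma mcop_act:
  "teq B QQ QQ (mcop QQ (mact QQ h X)) (tact QQ QQ (cop B h) (mcop QQ X))"
proof -
  define r where "r = qrep I X"
  let ?P = "fpush (\<lambda>(u, v). (qq u, qq v))"
  have fh: "finite (fsupp (cop B h))" and fr: "finite (fsupp (cop B r))" and fhr: "finite (fsupp (cop B (h * r)))"
    by (rule bialgD(1)[OF B])+
  have ft: "finite (fsupp (tact (Hc B) (Hc B) (cop B h) (cop B r)))" by (rule fin_tact[OF fh fr])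
  have a: "teq B QQ QQ (mcop QQ (qq (h * r))) (?P (cop B (h * r)))" by (rule K1[OF B I])
  have b: "teq B QQ QQ (?P (cop B (h * r))) (?P (tact (Hc B) (Hc B) (cop B h) (cop B r)))"
    by (rule teq_push[OF bialgD(3)[OF B] fhr ft mmap_q[OF B I] mmap_q[OF B I]])
  have c: "tact QQ QQ (cop B h) (mcop QQ X) = ?P (tact (Hc B) (Hc B) (cop B h) (cop B r))"
    using tact_push[OF fh fr] by (simp add: r_def)
  have d: "mact QQ h X = qq (h * r)" by (simp add: r_def)
  show ?thesis unfolding c d using teq_trans[OF a b] .
qed

lemma coassoc_Q: "coassoc B QQ (mcop QQ)"
  unfolding coassoc_def
proof
  fix X assume X: "X \<in> mcar QQ"
  define \<phi> where "\<phi> = cop B (qrep I X)"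
  let ?P2 = "fpush (\<lambda>(u, v). (qq u, qq v))"
  let ?P3 = "fpush (\<lambda>(x, y, z). (qq x, qq y, qq z))"
  have f\<phi>: "finite (fsupp \<phi>)" unfolding \<phi>_def by (rule bialgD(1)[OF B])
  have fc: "finite (fsupp (cop B u))" for u by (rule bialgD(1)[OF B])
  have DX: "mcop QQ X = ?P2 \<phi>" by (simp add: \<phi>_def)
  define LH where "LH = fbind \<phi> (\<lambda>(u, v). fpush (\<lambda>(x, y). (x, y, v)) (cop B u))"
  define RH where "RH = fbind \<phi> (\<lambda>(u, v). fpush (\<lambda>(x, y). (u, x, y)) (cop B v))"
  have finL: "finite (fsupp ((\<lambda>(u, v). fpush (\<lambda>(x, y). (x, y, v)) (cop B u)) p))" for p
    by (auto simp: finite_fpush[OF fc] split: prod.splits)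
  have finR: "finite (fsupp ((\<lambda>(u, v). fpush (\<lambda>(x, y). (u, x, y)) (cop B v)) p))" for p
    by (auto simp: finite_fpush[OF fc] split: prod.splits)
  have cH: "teq3 B (Hc B) (Hc B) (Hc B) LH RH"
    using bialgD(7)[OF B] unfolding coassoc_def LH_def RH_def \<phi>_def by simp
  have fLH: "finite (fsupp LH)" unfolding LH_def by (rule finite_fbind[OF f\<phi> finL])
  have fRH: "finite (fsupp RH)" unfolding RH_def by (rule finite_fbind[OF f\<phi> finR])
  have m: "teq3 B QQ QQ QQ (?P3 LH) (?P3 RH)"
    by (rule teq3_push[OF cH fLH fRH mmap_q[OF B I] mmap_q[OF B I] mmap_q[OF B I]])
  have Lp: "\<And>u v. teq3 B QQ QQ QQ (fpush (\<lambda>(x, y). (x, y, qq v)) (mcop QQ (qq u)))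
      (?P3 (fpush (\<lambda>(x, y). (x, y, v)) (cop B u)))"
  proof -
    fix u v
    have e: "?P3 (fpush (\<lambda>(x, y). (x, y, v)) (cop B u)) = fpush (\<lambda>(x, y). (x, y, qq v)) (?P2 (cop B u))"
      by (simp add: fpush_comp[OF fc] split_beta)
    show "teq3 B QQ QQ QQ (fpush (\<lambda>(x, y). (x, y, qq v)) (mcop QQ (qq u)))
      (?P3 (fpush (\<lambda>(x, y). (x, y, v)) (cop B u)))" unfolding e
      by (rule teq_slice3[OF K1[OF B I] fin_mcop[OF B I] finite_fpush[OF fc]]) simp
  qed
  have Rp: "\<And>u v. teq3 B QQ QQ QQ (fpush (\<lambda>(x, y). (qq u, x, y)) (mcop QQ (qq v)))
      (?P3 (fpush (\<lambda>(x, y). (u, x, y)) (cop B v)))"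
  proof -
    fix u v
    have e: "?P3 (fpush (\<lambda>(x, y). (u, x, y)) (cop B v)) = fpush (\<lambda>(x, y). (qq u, x, y)) (?P2 (cop B v))"
      by (simp add: fpush_comp[OF fc] split_beta)
    show "teq3 B QQ QQ QQ (fpush (\<lambda>(x, y). (qq u, x, y)) (mcop QQ (qq v)))
      (?P3 (fpush (\<lambda>(x, y). (u, x, y)) (cop B v)))" unfolding e
      by (rule teq_slice1[OF K1[OF B I] fin_mcop[OF B I] finite_fpush[OF fc]]) simp
  qed
  have L: "teq3 B QQ QQ QQ (fbind (mcop QQ X) (\<lambda>(u, v). fpush (\<lambda>(x, y). (x, y, v)) (mcop QQ u))) (?P3 LH)"
  proof -
    have e1: "fbind (mcop QQ X) (\<lambda>(u, v). fpush (\<lambda>(x, y). (x, y, v)) (mcop QQ u))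
        = fbind \<phi> (\<lambda>p. (\<lambda>(u, v). fpush (\<lambda>(x, y). (x, y, v)) (mcop QQ u)) ((\<lambda>(u, v). (qq u, qq v)) p))"
      unfolding DX by (rule fbind_push[OF f\<phi>])
    have e2: "?P3 LH = fbind \<phi> (\<lambda>p. ?P3 ((\<lambda>(u, v). fpush (\<lambda>(x, y). (x, y, v)) (cop B u)) p))"
      unfolding LH_def by (rule fpush_fbind[OF f\<phi> finL])
    show ?thesis unfolding e1 e2
    proof (rule teq3_fbind[OF _ f\<phi>])
      fix p :: "'h \<times> 'h"
      show "teq3 B QQ QQ QQ ((\<lambda>(u, v). fpush (\<lambda>(x, y). (x, y, v)) (mcop QQ u)) ((\<lambda>(u, v). (qq u, qq v)) p))
          (?P3 ((\<lambda>(u, v). fpush (\<lambda>(x, y). (x, y, v)) (cop B u)) p))"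
        using Lp[of "snd p" "fst p"] by (simp add: split_beta del: Qc_simps)
    qed
  qed
  have R: "teq3 B QQ QQ QQ (fbind (mcop QQ X) (\<lambda>(u, v). fpush (\<lambda>(x, y). (u, x, y)) (mcop QQ v))) (?P3 RH)"
  proof -
    have e1: "fbind (mcop QQ X) (\<lambda>(u, v). fpush (\<lambda>(x, y). (u, x, y)) (mcop QQ v))
        = fbind \<phi> (\<lambda>p. (\<lambda>(u, v). fpush (\<lambda>(x, y). (u, x, y)) (mcop QQ v)) ((\<lambda>(u, v). (qq u, qq v)) p))"
      unfolding DX by (rule fbind_push[OF f\<phi>])
    have e2: "?P3 RH = fbind \<phi> (\<lambda>p. ?P3 ((\<lambda>(u, v). fpush (\<lambda>(x, y). (u, x, y)) (cop B v)) p))"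
      unfolding RH_def by (rule fpush_fbind[OF f\<phi> finR])
    show ?thesis unfolding e1 e2
    proof (rule teq3_fbind[OF _ f\<phi>])
      fix p :: "'h \<times> 'h"
      show "teq3 B QQ QQ QQ ((\<lambda>(u, v). fpush (\<lambda>(x, y). (u, x, y)) (mcop QQ v)) ((\<lambda>(u, v). (qq u, qq v)) p))
          (?P3 ((\<lambda>(u, v). fpush (\<lambda>(x, y). (u, x, y)) (cop B v)) p))"
        using Rp[of "fst p" "snd p"] by (simp add: split_beta del: Qc_simps)
    qed
  qed
  show "teq3 B QQ QQ QQ (fbind (mcop QQ X) (\<lambda>(u, v). fpush (\<lambda>(x, y). (x, y, v)) (mcop QQ u)))
                       (fbind (mcop QQ X) (\<lambda>(u, v). fpush (\<lambda>(x, y). (u, x, y)) (mcop QQ v)))"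
    by (rule teq3_trans[OF teq3_trans[OF L m] teq3_sym[OF R]])
qed


lemma qsum: "finite A \<Longrightarrow> I + (\<Sum>P\<in>A. qq (g P)) = qq (\<Sum>P\<in>A. g P)"
proof (induction A rule: finite_induct)
  case empty then show ?case using q_zero[OF B I] by simp
next
  case (insert x A)
  have "I + (\<Sum>P\<in>insert x A. qq (g P)) = I + (qq (g x) + (\<Sum>P\<in>A. qq (g P)))"
    using insert by simp
  also have "\<dots> = qq (g x) + (I + (\<Sum>P\<in>A. qq (g P)))" by (simp add: add.left_commute)
  also have "\<dots> = qq (g x) + qq (\<Sum>P\<in>A. g P)" using insert.IH by simp
  also have "\<dots> = qq (g x + (\<Sum>P\<in>A. g P))" by (rule q_add[OF B I])
  finally show ?case using insert by simp
qed

lemma counit_aux: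
  fixes a b :: "'h \<times> 'h \<Rightarrow> 'h" and a' b' :: "'h set \<times> 'h set \<Rightarrow> 'h set" and G :: "'a \<Rightarrow> 'h"
  assumes ha: "\<And>u v. a' (qq u, qq v) = qq (a (u, v))" and hb: "\<And>u v. b' (qq u, qq v) = qq (b (u, v))"
  shows "msum QQ (\<lambda>P. mact QQ (scH B (mcop QQ X P) 1 * G (mcou QQ (a' P))) (b' P)) (fsupp (mcop QQ X))
     = qq (\<Sum>p\<in>fsupp (cop B (qrep I X)). scH B (cop B (qrep I X) p) 1 * G (cou B (a p)) * b p)"
proof -
  interpret V: vector_space "scH B" using bialgD(9)[OF B] by (simp add: kalg_def)
  define \<phi> where "\<phi> = cop B (qrep I X)"
  define S where "S = fsupp \<phi>"
  define q2 where "q2 = (\<lambda>(u, v). (qq u, qq v))"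
  define D where "D = fpush q2 \<phi>"
  define T where "T = q2 ` S"
  have f\<phi>: "finite S" unfolding S_def \<phi>_def by (rule bialgD(1)[OF B])
  have fT: "finite T" unfolding T_def using f\<phi> by simp
  have DX: "mcop QQ X = D" by (simp add: D_def \<phi>_def q2_def)
  have fD: "finite (fsupp D)" unfolding D_def using finite_fpush f\<phi> S_def by blast
  have sD: "fsupp D \<subseteq> T" unfolding D_def T_def S_def by (rule fsupp_fpush)
  define g where "g P = scH B (D P) 1 * G (cou B (qrep I (a' P))) * qrep I (b' P)" for P
  define h where "h p = scH B (\<phi> p) 1 * G (cou B (a p)) * qrep I (qq (b p))" for p
  have step1: "msum QQ (\<lambda>P. mact QQ (scH B (mcop QQ X P) 1 * G (mcou QQ (a' P))) (b' P)) (fsupp (mcop QQ X))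
      = qq (\<Sum>P\<in>fsupp D. g P)"
    unfolding DX unfolding msum_Qc[OF fD] Qc_simps(4) Qc_simps(6) g_def by (rule qsum[OF fD])
  have step2: "(\<Sum>P\<in>fsupp D. g P) = (\<Sum>P\<in>T. g P)"
    by (rule sum.mono_neutral_left[OF fT sD]) (auto simp: g_def fsupp_def)
  have fib: "g P = (\<Sum>p\<in>{x. x \<in> S \<and> q2 x = P}. h p)" if P: "P \<in> T" for P
  proof -
    let ?F = "{x. x \<in> S \<and> q2 x = P}"
    have "D P = (\<Sum>p\<in>S. \<phi> p * fdelta (q2 p) P)"
      unfolding D_def S_def by (rule fpush_rep) (use f\<phi> S_def in auto)
    also have "\<dots> = (\<Sum>p\<in>S. if q2 p = P then \<phi> p else 0)"
      by (intro sum.cong) (auto simp: fdelta_def)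
    also have "\<dots> = (\<Sum>p\<in>?F. \<phi> p)" using sum.inter_filter[OF f\<phi>, of \<phi> "\<lambda>p. q2 p = P"] by simp
    finally have DP: "D P = (\<Sum>p\<in>?F. \<phi> p)" .
    have hp: "h p = scH B (\<phi> p) 1 * G (cou B (qrep I (a' P))) * qrep I (b' P)" if "p \<in> ?F" for p
    proof -
      have "P = (qq (fst p), qq (snd p))" using that by (auto simp: q2_def split_beta)
      then have "a' P = qq (a p)" "b' P = qq (b p)" using ha[of "fst p" "snd p"] hb[of "fst p" "snd p"] by simp_all
      then show ?thesis by (simp add: h_def cou_q[OF B I])
    qed
    have "(\<Sum>p\<in>?F. h p) = (\<Sum>p\<in>?F. scH B (\<phi> p) 1 * G (cou B (qrep I (a' P))) * qrep I (b' P))"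
      using hp by (rule sum.cong[OF refl])
    also have "\<dots> = scH B (\<Sum>p\<in>?F. \<phi> p) 1 * G (cou B (qrep I (a' P))) * qrep I (b' P)"
      by (simp add: V.scale_sum_left sum_distrib_right)
    finally show ?thesis by (simp add: g_def DP)
  qed
  have step3: "(\<Sum>P\<in>T. g P) = (\<Sum>p\<in>S. h p)"
  proof -
    have "(\<Sum>P\<in>T. g P) = (\<Sum>P\<in>T. \<Sum>p\<in>{x. x \<in> S \<and> q2 x = P}. h p)"
      using fib by (rule sum.cong[OF refl])
    also have "\<dots> = (\<Sum>p\<in>S. h p)" by (rule sum.group[OF f\<phi> fT]) (simp add: T_def)
    finally show ?thesis .
  qed
  have step4: "qq (\<Sum>p\<in>S. h p) = qq (\<Sum>p\<in>S. scH B (\<phi> p) 1 * G (cou B (a p)) * b p)"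
  proof (rule q_eqI[OF B I])
    have "(\<Sum>p\<in>S. h p) - (\<Sum>p\<in>S. scH B (\<phi> p) 1 * G (cou B (a p)) * b p)
        = (\<Sum>p\<in>S. (scH B (\<phi> p) 1 * G (cou B (a p))) * (qrep I (qq (b p)) - b p))"
      by (simp add: h_def sum_subtractf right_diff_distrib)
    also have "\<dots> \<in> I"
      by (rule lic_sum[OF I f\<phi>]) (rule lic_mult[OF I qrep_diff[OF B I]])
    finally show "(\<Sum>p\<in>S. h p) - (\<Sum>p\<in>S. scH B (\<phi> p) 1 * G (cou B (a p)) * b p) \<in> I" .
  qed
  show ?thesis using step1 step2 step3 step4 by (simp add: S_def \<phi>_def)
qed

lemma counital_Q: "counital B QQ (mcop QQ) (mcou QQ)"
  unfolding counital_def
proof (intro ballI conjI)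
  fix X assume X: "X \<in> mcar QQ"
  have Xr: "qq (qrep I X) = X" using X qrep_q[OF B I] by auto
  have fr: "finite (fsupp (cop B (qrep I X)))" by (rule bialgD(1)[OF B])
  have cH: "sum (\<lambda>p. scH B (cop B (qrep I X) p) 1 * src B (cou B (fst p)) * snd p) (fsupp (cop B (qrep I X))) = qrep I X"
    "sum (\<lambda>p. scH B (cop B (qrep I X) p) 1 * tgt B (cou B (snd p)) * fst p) (fsupp (cop B (qrep I X))) = qrep I X"
  proof -
    have "\<forall>c. msum (Hc B) (\<lambda>p. scH B (cop B c p) 1 * src B (cou B (fst p)) * snd p) (fsupp (cop B c)) = c
       \<and> msum (Hc B) (\<lambda>p. scH B (cop B c p) 1 * tgt B (cou B (snd p)) * fst p) (fsupp (cop B c)) = c"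
      using bialgD(8)[OF B] by (simp add: counital_def)
    note spec[OF this, of "qrep I X"]
    then show "sum (\<lambda>p. scH B (cop B (qrep I X) p) 1 * src B (cou B (fst p)) * snd p) (fsupp (cop B (qrep I X))) = qrep I X"
      "sum (\<lambda>p. scH B (cop B (qrep I X) p) 1 * tgt B (cou B (snd p)) * fst p) (fsupp (cop B (qrep I X))) = qrep I X"
      by (simp_all add: msum_Hc[OF fr])
  qed
  show "msum QQ (\<lambda>p. mact QQ (scH B (mcop QQ X p) 1 * src B (mcou QQ (fst p))) (snd p)) (fsupp (mcop QQ X)) = X"
    using counit_aux[of fst fst snd snd X "src B"] cH(1) Xr by (simp del: Qc_simps)
  show "msum QQ (\<lambda>p. mact QQ (scH B (mcop QQ X p) 1 * tgt B (mcou QQ (snd p))) (fst p)) (fsupp (mcop QQ X)) = X"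
    using counit_aux[of snd snd fst fst X "tgt B"] cH(2) Xr by (simp del: Qc_simps)
qed


lemma mact_q': "qq (h * qrep I (qq x)) = qq (h * x)"
  using mact_q[OF B I] by simp

lemma mc_Q: "module_coring B QQ"
proof -
  have 2: "\<forall>c\<in>mcar QQ. tsum QQ QQ (mcop QQ c)" using tsum_Q by blast
  have 3: "\<forall>c\<in>mcar QQ. \<forall>c'\<in>mcar QQ. teq B QQ QQ (mcop QQ (madd QQ c c')) (\<lambda>p. mcop QQ c p + mcop QQ c' p)"
  proof (intro ballI)
    fix c c' assume "c \<in> mcar QQ" "c' \<in> mcar QQ"
    then obtain x y where xy: "c = qq x" "c' = qq y" by auto
    show "teq B QQ QQ (mcop QQ (madd QQ c c')) (\<lambda>p. mcop QQ c p + mcop QQ c' p)"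
      using mcop_add[of x y] by (simp only: xy Qc_simps(2))
  qed
  have 4: "\<forall>h. \<forall>c\<in>mcar QQ. teq B QQ QQ (mcop QQ (mact QQ h c)) (tact QQ QQ (cop B h) (mcop QQ c))"
    using mcop_act by blast
  have 5: "\<forall>c\<in>mcar QQ. \<forall>c'\<in>mcar QQ. mcou QQ (madd QQ c c') = mcou QQ c + mcou QQ c'"
  proof (intro ballI)
    fix c c' assume "c \<in> mcar QQ" "c' \<in> mcar QQ"
    then obtain x y where xy: "c = qq x" "c' = qq y" by auto
    show "mcou QQ (madd QQ c c') = mcou QQ c + mcou QQ c'"
      by (simp add: xy q_add[OF B I] cou_q[OF B I] bialgD(4)[OF B])
  qed
  have 6: "\<forall>h. \<forall>c\<in>mcar QQ. mcou QQ (mact QQ h c) = cou B (h * src B (mcou QQ c))"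
    by (simp add: cou_q[OF B I] bialgD(5)[OF B])
  show ?thesis unfolding module_coring_def
    using hmod_Q[OF B I] 2 3 4 5 6 coassoc_Q counital_Q by blast
qed

lemma mch_q: "mc_hom B (Hc B) QQ qq"
  unfolding mc_hom_def
proof (intro conjI)
  show "\<forall>x\<in>mcar (Hc B). qq x \<in> mcar QQ" by simp
  show "\<forall>x\<in>mcar (Hc B). \<forall>y\<in>mcar (Hc B). qq (madd (Hc B) x y) = madd QQ (qq x) (qq y)"
    by (simp add: q_add[OF B I])
  show "\<forall>h. \<forall>x\<in>mcar (Hc B). qq (mact (Hc B) h x) = mact QQ h (qq x)"
    by (simp add: mact_q')
  show "\<forall>x\<in>mcar (Hc B). teq B QQ QQ (mcop QQ (qq x)) (fpush (\<lambda>(u, v). (qq u, qq v)) (mcop (Hc B) x))"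
    using K1[OF B I] by simp
  show "\<forall>x\<in>mcar (Hc B). mcou QQ (qq x) = mcou (Hc B) x"
    by (simp add: cou_q[OF B I])
qed

lemma kerm_q: "kerm QQ qq = I"
  unfolding kerm_def using qmap_ker[OF I] by auto

end

theorem proposition2p3:
  fixes B :: "('k::field, 'a::ring_1, 'h::ring_1) bialg"
  assumes "bialgebroid B"
  shows
    "(\<forall>I. lideal_coideal B I \<longrightarrow>
        (\<exists>Q :: ('h, 'h set, 'k, 'a) hcor.
            mcar Q = range (qmap I) \<and> module_coring B Q \<and> mc_hom B (Hc B) Q (qmap I)
            \<and> kerm Q (qmap I) = I))
   \<and> (\<forall>(C :: ('h, 'b, 'k, 'a) hcor) \<pi>.
        module_coring B C \<and> mc_hom B (Hc B) C \<pi> \<and> range \<pi> = mcar C \<longrightarrow>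
          lideal_coideal B (kerm C \<pi>) \<and>
          (\<forall>Q :: ('h, 'h set, 'k, 'a) hcor.
             mcar Q = range (qmap (kerm C \<pi>)) \<and> module_coring B Q
             \<and> mc_hom B (Hc B) Q (qmap (kerm C \<pi>)) \<longrightarrow>
             (\<exists>\<phi>. mc_hom B Q C \<phi> \<and> bij_betw \<phi> (mcar Q) (mcar C)
                  \<and> (\<forall>x. \<phi> (qmap (kerm C \<pi>) x) = \<pi> x))))"
proof (intro conjI allI impI)
  fix I assume I: "lideal_coideal B I"
  show "\<exists>Q :: ('h, 'h set, 'k, 'a) hcor.
            mcar Q = range (qmap I) \<and> module_coring B Q \<and> mc_hom B (Hc B) Q (qmap I)
            \<and> kerm Q (qmap I) = I"
    using mc_Q[OF assms I] mch_q[OF assms I] kerm_q[OF assms I]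
    by (intro exI[of _ "Qc B I"]) simp
next
  fix C :: "('h, 'b, 'k, 'a) hcor" and \<pi>
  assume h: "module_coring B C \<and> mc_hom B (Hc B) C \<pi> \<and> range \<pi> = mcar C"
  show "lideal_coideal B (kerm C \<pi>)" using part2_coideal[OF assms] h by blast
  fix Q :: "('h, 'h set, 'k, 'a) hcor"
  assume "mcar Q = range (qmap (kerm C \<pi>)) \<and> module_coring B Q \<and> mc_hom B (Hc B) Q (qmap (kerm C \<pi>))"
  then show "\<exists>\<phi>. mc_hom B Q C \<phi> \<and> bij_betw \<phi> (mcar Q) (mcar C) \<and> (\<forall>x. \<phi> (qmap (kerm C \<pi>) x) = \<pi> x)"
    using part2_iso[OF assms] h by blast
qed

end
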